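(* Let $n=5$ and let $T$ be a non-star tree metric on $5$ taxa, realized by a weighted tree with positive edge weights (and no vertices of degree $2$), and denote by $e_p$ the weight of the edge attached to leaf $p$. Then $T$ is a tropical mixture $D\oplus\bar D$ of two star tree metrics $D,\bar D$ if and only if $T$ has exactly one internal edge, of weight $g$, and $e_i,e_j>g$, where $i,j$ are the leaves of the unique cherry attached to one endpoint of the internal edge (the other three leaves being attached to the other endpoint). Moreover, the fiber over such a tree $T$ (the set of ordered pairs $(D,\bar D)$ of star tree metrics with $D\oplus\bar D=T$) is the union of four disjoint $\mathfrak{S}_2$-orbits of $2$-dimensional polygons of pairs $(D,\bar D)$, where $\mathfrak{S}_2$ acts by swapping $D$ and $\bar D$.
   Context: A weighted tree on $n$ taxa is a tree with leaves labeled $1,\dots,n$ and edge weights; its tree metric is $d(p,q)=$ sum of the weights along the path from $p$ to $q$. A star tree metric is the tree metric of a star tree (a single internal vertex adjacent to all $n$ leaves) all of whose edges have strictly positive weights, i.e. $D_{pq}=w_p+w_q$ for $p\neq q$ with all $w_p>0$. The tropical mixture of two such matrices is the entrywise maximum $(D\oplus\bar D)_{pq}=\max\{D_{pq},\bar D_{pq}\}$. A non-star tree metric is one whose realizing tree (with positive weights and no degree-2 vertices) has at least one internal edge. *)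

theory Defs
  imports "HOL-Analysis.Analysis"
begin

text \<open>Taxa are the 5 elements of the numeral type 5. Distance matrices are
  elements of real^5^5, so that the fiber lives in a Euclidean space.\<close>

definition star_metric :: "real^5^5 \<Rightarrow> bool" where
  "star_metric D \<longleftrightarrow> (\<exists>w::real^5. (\<forall>p. w$p > 0) \<and>
      (\<forall>p q. D$p$q = (if p = q then 0 else w$p + w$q)))"

definition tmix :: "real^5^5 \<Rightarrow> real^5^5 \<Rightarrow> real^5^5" where
  "tmix D Db = (\<chi> p q. max (D$p$q) (Db$p$q))"

definition spath :: "'v set set \<Rightarrow> 'v list \<Rightarrow> 'v \<Rightarrow> 'v \<Rightarrow> bool" where
  "spath E xs a b \<longleftrightarrow> xs \<noteq> [] \<and> hd xs = a \<and> last xs = b \<and> distinct xs \<and>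
     (\<forall>i. Suc i < length xs \<longrightarrow> {xs!i, xs!Suc i} \<in> E)"

definition is_tree :: "'v set \<Rightarrow> 'v set set \<Rightarrow> bool" where
  "is_tree V E \<longleftrightarrow> finite V \<and> V \<noteq> {} \<and>
     E \<subseteq> {{a, b} | a b. a \<in> V \<and> b \<in> V \<and> a \<noteq> b} \<and>
     (\<forall>a\<in>V. \<forall>b\<in>V. \<exists>!xs. spath E xs a b)"

definition vdegree :: "'v set set \<Rightarrow> 'v \<Rightarrow> nat" where
  "vdegree E v = card {e \<in> E. v \<in> e}"

definition weighted_phylo_tree ::
  "'v set \<Rightarrow> 'v set set \<Rightarrow> ('v set \<Rightarrow> real) \<Rightarrow> (5 \<Rightarrow> 'v) \<Rightarrow> bool" where
  "weighted_phylo_tree V E w leaf \<longleftrightarrow> is_tree V E \<and> inj leaf \<and> range leaf \<subseteq> V \<and>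
     (\<forall>p. vdegree E (leaf p) = 1) \<and>
     (\<forall>v \<in> V - range leaf. vdegree E v \<ge> 3) \<and>
     (\<forall>e\<in>E. w e > 0)"

definition path_length :: "('v set \<Rightarrow> real) \<Rightarrow> 'v list \<Rightarrow> real" where
  "path_length w xs = (\<Sum>i < length xs - 1. w {xs!i, xs!Suc i})"

definition realizes ::
  "'v set set \<Rightarrow> ('v set \<Rightarrow> real) \<Rightarrow> (5 \<Rightarrow> 'v) \<Rightarrow> real^5^5 \<Rightarrow> bool" where
  "realizes E w leaf T \<longleftrightarrow>
     (\<forall>p q xs. spath E xs (leaf p) (leaf q) \<longrightarrow> T$p$q = path_length w xs)"

definition internal_edge :: "(5 \<Rightarrow> 'v) \<Rightarrow> 'v set \<Rightarrow> bool" where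
  "internal_edge leaf e \<longleftrightarrow> e \<inter> range leaf = {}"

definition fiber :: "real^5^5 \<Rightarrow> ((real^5^5) \<times> (real^5^5)) set" where
  "fiber T = {(D, Db). star_metric D \<and> star_metric Db \<and> tmix D Db = T}"

text \<open>A 2-dimensional polygon: a convex set of affine dimension 2 whose closure is
  a convex polytope (convex hull of finitely many points); boundary parts may be missing.\<close>
definition polygon2 :: "('a::euclidean_space) set \<Rightarrow> bool" where
  "polygon2 P \<longleftrightarrow> convex P \<and> aff_dim P = 2 \<and>
     (\<exists>S. finite S \<and> closure P = convex hull S)"

definition one_internal_cherry_cond ::
  "'v set set \<Rightarrow> ('v set \<Rightarrow> real) \<Rightarrow> (5 \<Rightarrow> 'v) \<Rightarrow> bool" where
  "one_internal_cherry_cond E w leaf \<longleftrightarrow>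
     (\<exists>u v i j. {u, v} \<in> E \<and> internal_edge leaf {u, v} \<and>
        (\<forall>f\<in>E. internal_edge leaf f \<longrightarrow> f = {u, v}) \<and>
        i \<noteq> j \<and> {u, leaf i} \<in> E \<and> {u, leaf j} \<in> E \<and>
        (\<forall>k. {u, leaf k} \<in> E \<longrightarrow> k = i \<or> k = j) \<and>
        w {u, leaf i} > w {u, v} \<and> w {u, leaf j} > w {u, v})"

end

theory Submission
  imports Defs
begin


lemma seg_closure:
  fixes x z0 :: "'a::real_normed_vector"
  assumes "\<And>t. 0 < t \<Longrightarrow> t \<le> 1 \<Longrightarrow> x + t *\<^sub>R (z0 - x) \<in> S"
  shows "x \<in> closure S"
proof -
  let ?f = "\<lambda>n. x + inverse (real (Suc n)) *\<^sub>R (z0 - x)"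
  have "\<forall>n. ?f n \<in> S"
    using assms by (simp add: field_simps)
  moreover have "?f \<longlonglongrightarrow> x + 0 *\<^sub>R (z0 - x)"
    by (intro tendsto_intros LIMSEQ_inverse_real_of_nat)
  ultimately show ?thesis unfolding closure_sequential by auto
qed

lemma segh:
  fixes u bb v t :: real
  assumes a: "u \<le> bb" "v < bb" "0 < t" "t \<le> 1"
  shows "u + t * (v - u) < bb"
proof -
  have "(1-t)*u \<le> (1-t)*bb" using a by (intro mult_left_mono) auto
  moreover have "t * v < t * bb" using a by auto
  ultimately show ?thesis by (simp add: algebra_simps)
qed

definition goodQ :: "(real \<times> real) set \<Rightarrow> bool" where
  "goodQ Q \<longleftrightarrow> convex Q \<and> (\<exists>Qo. open Qo \<and> Qo \<noteq> {} \<and> Qo \<subseteq> Q) \<and>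
     (\<exists>S. finite S \<and> closure Q = convex hull S)"

lemma poly2_image:
  fixes L :: "real\<times>real \<Rightarrow> 'a::euclidean_space"
  assumes "linear L" "inj L" "goodQ Q"
  shows "polygon2 ((\<lambda>z. c + L z) ` Q)"
proof -
  obtain Qo S where Qo: "open Qo" "Qo \<noteq> {}" "Qo \<subseteq> Q" and S: "finite S" "closure Q = convex hull S"
    and cQ: "convex Q" using assms(3) unfolding goodQ_def by blast
  have img: "(\<lambda>z. c + L z) ` Q = (+) c ` (L ` Q)" by auto
  have "aff_dim Qo = 2" using aff_dim_open[OF Qo(1,2)] by simp
  moreover have "aff_dim Qo \<le> aff_dim Q" by (rule aff_dim_subset[OF Qo(3)])
  moreover have "aff_dim Q \<le> 2" using aff_dim_le_DIM[of Q] by simp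
  ultimately have aQ: "aff_dim Q = 2" by simp
  have "convex ((\<lambda>z. c + L z) ` Q)" unfolding img
    by (intro convex_translation convex_linear_image assms cQ)
  moreover have "aff_dim ((\<lambda>z. c + L z) ` Q) = 2"
    unfolding img aff_dim_translation_eq using aQ assms by simp
  moreover have "closure ((\<lambda>z. c + L z) ` Q) = convex hull ((\<lambda>z. c + L z) ` S)"
  proof -
    have "closure ((\<lambda>z. c + L z) ` Q) = (+) c ` (L ` closure Q)"
      unfolding img closure_translation closure_injective_linear_image[OF assms(1,2)] ..
    also have "\<dots> = (+) c ` (convex hull (L ` S))"
      unfolding S(2) convex_hull_linear_image[OF assms(1)] ..
    also have "\<dots> = convex hull ((+) c ` (L ` S))"
      using convex_hull_translation[of c "L ` S"] by simp
    also have "(+) c ` (L ` S) = (\<lambda>z. c + L z) ` S" by auto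
    finally show ?thesis .
  qed
  ultimately show ?thesis unfolding polygon2_def using S(1) by blast
qed

lemma shapeA:
  fixes L c d :: real
  assumes "L < c" "d < -L"
  shows "goodQ {z. (if sl then L < fst z else L \<le> fst z) \<and> fst z < c \<and> d < snd z \<and> snd z \<le> - fst z}"
    (is "goodQ ?Q")
proof -
  let ?Qc = "{z::real\<times>real. L \<le> fst z \<and> fst z \<le> c \<and> d \<le> snd z \<and> snd z \<le> - fst z}"
  let ?Qo = "{z::real\<times>real. L < fst z \<and> fst z < c \<and> d < snd z \<and> snd z < - fst z}"
  define p0 where "p0 = (L + min c (-d))/2"
  define q0 where "q0 = (d - p0)/2"
  have z0: "(p0,q0) \<in> ?Qo" using assms unfolding p0_def q0_def by (auto simp: min_def field_simps)
  have cvx: "convex ?Q"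
  proof -
    have "?Q = {z. (if sl then (-1,0) \<bullet> z < -L else (-1,0) \<bullet> z \<le> -L)} \<inter> {z. (1,0) \<bullet> z < c}
        \<inter> {z. (0,-1) \<bullet> z < -d} \<inter> {z. (1,1) \<bullet> z \<le> (0::real)}"
      by (auto simp: inner_Pair_0 split: if_splits)
    moreover have "convex {z::real\<times>real. (if sl then (-1,0) \<bullet> z < -L else (-1,0) \<bullet> z \<le> -L)}"
      by (cases sl) (simp_all add: convex_halfspace_lt convex_halfspace_le)
    ultimately show ?thesis by (simp only:) (intro convex_Int convex_halfspace_lt convex_halfspace_le)
  qed
  have opn: "open ?Qo"
    by (intro open_Collect_conj open_Collect_less continuous_intros)
  have sub: "?Qo \<subseteq> ?Q" by auto
  have "polyhedron ?Qc"
  proof -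
    have "?Qc = {z. (-1,0) \<bullet> z \<le> -L} \<inter> {z. (1,0) \<bullet> z \<le> c} \<inter> {z. (0,-1) \<bullet> z \<le> -d}
        \<inter> {z. (1,1) \<bullet> z \<le> (0::real)}"
      by (auto simp: inner_Pair_0)
    then show ?thesis by (simp add: polyhedron_halfspace_le)
  qed
  moreover have "bounded ?Qc"
  proof -
    have "?Qc \<subseteq> {L..c} \<times> {d..-L}" by auto
    moreover have "bounded ({L..c} \<times> {d..-L})" by (intro bounded_Times bounded_closed_interval)
    ultimately show ?thesis using bounded_subset by blast
  qed
  ultimately have "polytope ?Qc" by (simp add: polytope_eq_bounded_polyhedron)
  then obtain S where S: "finite S" "?Qc = convex hull S" unfolding polytope_def by blast
  have "closure ?Q = ?Qc"
  proof
    show "closure ?Q \<subseteq> ?Qc"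
      by (intro closure_minimal) (auto simp: \<open>polytope ?Qc\<close> polytope_imp_closed split: if_splits)
    show "?Qc \<subseteq> closure ?Q"
    proof
      fix x assume x: "x \<in> ?Qc"
      have "x \<in> closure ?Qo"
      proof (rule seg_closure[of _ "(p0,q0)"])
        fix t :: real assume t: "0 < t" "t \<le> 1"
        obtain x1 x2 where xx: "x = (x1,x2)" by (cases x)
        have e: "x + t *\<^sub>R ((p0,q0) - x) = (x1 + t*(p0-x1), x2 + t*(q0-x2))" by (simp add: xx)
        have x': "L \<le> x1" "x1 \<le> c" "d \<le> x2" "x2 \<le> -x1" using x by (auto simp: xx)
        have z': "L < p0" "p0 < c" "d < q0" "q0 < -p0" using z0 by auto
        have 1: "-x1 + t*(-p0 - -x1) < -L" by (rule segh) (use x' z' t in auto)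
        have 2: "x1 + t*(p0 - x1) < c" by (rule segh) (use x' z' t in auto)
        have 3: "-x2 + t*(-q0 - -x2) < -d" by (rule segh) (use x' z' t in auto)
        have 4: "(x1+x2) + t*((p0+q0) - (x1+x2)) < 0" by (rule segh) (use x' z' t in auto)
        show "x + t *\<^sub>R ((p0,q0) - x) \<in> ?Qo"
          unfolding e using 1 2 3 4 by (simp add: algebra_simps)
      qed
      then show "x \<in> closure ?Q" using closure_mono[OF sub] by blast
    qed
  qed
  then show ?thesis unfolding goodQ_def using cvx opn sub z0 S by blast
qed

lemma shapeB:
  fixes L c d h :: real
  assumes "L < c" "d < h"
  shows "goodQ {z. (if sl then L < fst z else L \<le> fst z) \<and> fst z < c \<and> d < snd z \<and> snd z < h}"
    (is "goodQ ?Q")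
proof -
  let ?Qc = "{z::real\<times>real. L \<le> fst z \<and> fst z \<le> c \<and> d \<le> snd z \<and> snd z \<le> h}"
  let ?Qo = "{z::real\<times>real. L < fst z \<and> fst z < c \<and> d < snd z \<and> snd z < h}"
  define p0 where "p0 = (L + c)/2"
  define q0 where "q0 = (d + h)/2"
  have z0: "(p0,q0) \<in> ?Qo" using assms unfolding p0_def q0_def by (auto simp: min_def field_simps)
  have cvx: "convex ?Q"
  proof -
    have "?Q = {z. (if sl then (-1,0) \<bullet> z < -L else (-1,0) \<bullet> z \<le> -L)} \<inter> {z. (1,0) \<bullet> z < c}
        \<inter> {z. (0,-1) \<bullet> z < -d} \<inter> {z. (0,1) \<bullet> z < (h::real)}"
      by (auto simp: inner_Pair_0 split: if_splits)
    moreover have "convex {z::real\<times>real. (if sl then (-1,0) \<bullet> z < -L else (-1,0) \<bullet> z \<le> -L)}"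
      by (cases sl) (simp_all add: convex_halfspace_lt convex_halfspace_le)
    ultimately show ?thesis by (simp only:) (intro convex_Int convex_halfspace_lt convex_halfspace_le)
  qed
  have opn: "open ?Qo"
    by (intro open_Collect_conj open_Collect_less continuous_intros)
  have sub: "?Qo \<subseteq> ?Q" by auto
  have "polyhedron ?Qc"
  proof -
    have "?Qc = {z. (-1,0) \<bullet> z \<le> -L} \<inter> {z. (1,0) \<bullet> z \<le> c} \<inter> {z. (0,-1) \<bullet> z \<le> -d}
        \<inter> {z. (0,1) \<bullet> z \<le> (h::real)}"
      by (auto simp: inner_Pair_0)
    then show ?thesis by (simp add: polyhedron_halfspace_le)
  qed
  moreover have "bounded ?Qc"
  proof -
    have "?Qc \<subseteq> {L..c} \<times> {d..h}" by auto
    moreover have "bounded ({L..c} \<times> {d..h})" by (intro bounded_Times bounded_closed_interval)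
    ultimately show ?thesis using bounded_subset by blast
  qed
  ultimately have "polytope ?Qc" by (simp add: polytope_eq_bounded_polyhedron)
  then obtain S where S: "finite S" "?Qc = convex hull S" unfolding polytope_def by blast
  have "closure ?Q = ?Qc"
  proof
    show "closure ?Q \<subseteq> ?Qc"
      by (intro closure_minimal) (auto simp: \<open>polytope ?Qc\<close> polytope_imp_closed split: if_splits)
    show "?Qc \<subseteq> closure ?Q"
    proof
      fix x assume x: "x \<in> ?Qc"
      have "x \<in> closure ?Qo"
      proof (rule seg_closure[of _ "(p0,q0)"])
        fix t :: real assume t: "0 < t" "t \<le> 1"
        obtain x1 x2 where xx: "x = (x1,x2)" by (cases x)
        have e: "x + t *\<^sub>R ((p0,q0) - x) = (x1 + t*(p0-x1), x2 + t*(q0-x2))" by (simp add: xx)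
        have x': "L \<le> x1" "x1 \<le> c" "d \<le> x2" "x2 \<le> h" using x by (auto simp: xx)
        have z': "L < p0" "p0 < c" "d < q0" "q0 < h" using z0 by auto
        have 1: "-x1 + t*(-p0 - -x1) < -L" by (rule segh) (use x' z' t in auto)
        have 2: "x1 + t*(p0 - x1) < c" by (rule segh) (use x' z' t in auto)
        have 3: "-x2 + t*(-q0 - -x2) < -d" by (rule segh) (use x' z' t in auto)
        have 4: "x2 + t*(q0 - x2) < h" by (rule segh) (use x' z' t in auto)
        show "x + t *\<^sub>R ((p0,q0) - x) \<in> ?Qo"
          unfolding e using 1 2 3 4 by (simp add: algebra_simps)
      qed
      then show "x \<in> closure ?Q" using closure_mono[OF sub] by blast
    qed
  qed
  then show ?thesis unfolding goodQ_def using cvx opn sub z0 S by blast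
qed


definition "MX a1 a2 a3 a4 a5 b1 b2 b3 b4 b5 e1 e2 e3 e4 e5 (g::real) \<longleftrightarrow>
   max (a1+a2) (b1+b2) = e1+e2 \<and>
   max (a1+a3) (b1+b3) = e1+g+e3 \<and>
   max (a1+a4) (b1+b4) = e1+g+e4 \<and>
   max (a1+a5) (b1+b5) = e1+g+e5 \<and>
   max (a2+a3) (b2+b3) = e2+g+e3 \<and>
   max (a2+a4) (b2+b4) = e2+g+e4 \<and>
   max (a2+a5) (b2+b5) = e2+g+e5 \<and>
   max (a3+a4) (b3+b4) = e3+e4 \<and>
   max (a3+a5) (b3+b5) = e3+e5 \<and>
   max (a4+a5) (b4+b5) = e4+e5"

definition "CA sl a1 a2 a3 a4 a5 b1 b2 b3 b4 b5 e1 e2 e3 e4 e5 (g::real) \<longleftrightarrow>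
  b1 = e1 - g \<and> b2 = e2 + g \<and> b3 = e3 \<and> b4 = e4 \<and> b5 = e5 \<and>
  a3 - e3 = g - (a1 - e1) \<and> a4 - e4 = g - (a1 - e1) \<and> a5 - e5 = g - (a1 - e1) \<and>
  (if sl then g < a1 - e1 else g \<le> a1 - e1) \<and> a1 - e1 < g + min e3 (min e4 e5) \<and>
  -e2 < a2 - e2 \<and> a2 - e2 \<le> -(a1-e1)"

definition "CB sl a1 a2 a3 a4 a5 b1 b2 b3 b4 b5 e1 e2 e3 e4 e5 (g::real) \<longleftrightarrow>
  b2 = e2 + g \<and> b3 = e3 \<and> b4 = e4 \<and> b5 = e5 \<and> -e1 < b1 - e1 \<and> b1 - e1 < -g \<and>
  a2 - e2 = -(a1-e1) \<and>
  a3 - e3 = g - (a1 - e1) \<and> a4 - e4 = g - (a1 - e1) \<and> a5 - e5 = g - (a1 - e1) \<and>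
  (if sl then g < a1 - e1 else g \<le> a1 - e1) \<and> a1 - e1 < min e2 (g + min e3 (min e4 e5))"

definition POS :: "real \<Rightarrow> real \<Rightarrow> real \<Rightarrow> real \<Rightarrow> real \<Rightarrow> real \<Rightarrow> real \<Rightarrow> real \<Rightarrow> real \<Rightarrow> real \<Rightarrow> bool" where "POS a1 a2 a3 a4 a5 b1 b2 b3 b4 b5 \<longleftrightarrow> a1 > 0 \<and> a2 > 0 \<and> a3 > 0 \<and> a4 > 0 \<and> a5 > 0 \<and>
   b1 > 0 \<and> b2 > 0 \<and> b3 > 0 \<and> b4 > 0 \<and> b5 > 0"

lemma mx_sw12: "MX a2 a1 a3 a4 a5 b2 b1 b3 b4 b5 e2 e1 e3 e4 e5 g = MX a1 a2 a3 a4 a5 b1 b2 b3 b4 b5 e1 e2 e3 e4 e5 g"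
  unfolding MX_def by (auto simp: ac_simps)
lemma mx_swab: "MX b1 b2 b3 b4 b5 a1 a2 a3 a4 a5 e1 e2 e3 e4 e5 g = MX a1 a2 a3 a4 a5 b1 b2 b3 b4 b5 e1 e2 e3 e4 e5 g"
  unfolding MX_def by (auto simp: max.commute)

lemma CA_ok:
  assumes "g > 0" "e1>g" "e2>g" "e3>0" "e4>0" "e5>0" "CA sl a1 a2 a3 a4 a5 b1 b2 b3 b4 b5 e1 e2 e3 e4 e5 g"
  shows "POS a1 a2 a3 a4 a5 b1 b2 b3 b4 b5 \<and> MX a1 a2 a3 a4 a5 b1 b2 b3 b4 b5 e1 e2 e3 e4 e5 g"
  using assms unfolding CA_def MX_def POS_def max_def min_def by (auto split: if_splits)

lemma CB_ok:
  assumes "g > 0" "e1>g" "e2>g" "e3>0" "e4>0" "e5>0" "CB sl a1 a2 a3 a4 a5 b1 b2 b3 b4 b5 e1 e2 e3 e4 e5 g"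
  shows "POS a1 a2 a3 a4 a5 b1 b2 b3 b4 b5 \<and> MX a1 a2 a3 a4 a5 b1 b2 b3 b4 b5 e1 e2 e3 e4 e5 g"
  using assms unfolding CB_def MX_def POS_def max_def min_def by (auto split: if_splits)

lemma one:
  fixes a1 a2 a3 a4 a5 b1 b2 b3 b4 b5 e1 e2 e3 e4 e5 g :: real
  assumes "g>0" "POS a1 a2 a3 a4 a5 b1 b2 b3 b4 b5"
    "MX a1 a2 a3 a4 a5 b1 b2 b3 b4 b5 e1 e2 e3 e4 e5 g"
  shows "e1 > g \<and> e2 > g"
  using assms unfolding max_def MX_def POS_def by (smt (z3))

lemma fib:
  fixes a1 a2 a3 a4 a5 b1 b2 b3 b4 b5 e1 e2 e3 e4 e5 g :: real
  assumes "g>0" "POS a1 a2 a3 a4 a5 b1 b2 b3 b4 b5"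
    "MX a1 a2 a3 a4 a5 b1 b2 b3 b4 b5 e1 e2 e3 e4 e5 g"
  shows "CA False a1 a2 a3 a4 a5 b1 b2 b3 b4 b5 e1 e2 e3 e4 e5 g \<or>
         CA False b1 b2 b3 b4 b5 a1 a2 a3 a4 a5 e1 e2 e3 e4 e5 g \<or>
         CA True a2 a1 a3 a4 a5 b2 b1 b3 b4 b5 e2 e1 e3 e4 e5 g \<or>
         CA True b2 b1 b3 b4 b5 a2 a1 a3 a4 a5 e2 e1 e3 e4 e5 g \<or>
         CB False a1 a2 a3 a4 a5 b1 b2 b3 b4 b5 e1 e2 e3 e4 e5 g \<or>
         CB False b1 b2 b3 b4 b5 a1 a2 a3 a4 a5 e1 e2 e3 e4 e5 g \<or>
         CB True a2 a1 a3 a4 a5 b2 b1 b3 b4 b5 e2 e1 e3 e4 e5 g \<or>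
         CB True b2 b1 b3 b4 b5 a2 a1 a3 a4 a5 e2 e1 e3 e4 e5 g"
  using assms unfolding max_def min_def MX_def CA_def CB_def POS_def by (smt (z3))

lemma disj:
  fixes a1 a2 a3 a4 a5 b1 b2 b3 b4 b5 e1 e2 e3 e4 e5 g :: real
  assumes "g>0"
  defines "X0 \<equiv> \<lambda>a1 a2 a3 a4 a5 b1 b2 b3 b4 b5. CA False a1 a2 a3 a4 a5 b1 b2 b3 b4 b5 e1 e2 e3 e4 e5 g"
    and "X1 \<equiv> \<lambda>a1 a2 a3 a4 a5 b1 b2 b3 b4 b5. CA True a2 a1 a3 a4 a5 b2 b1 b3 b4 b5 e2 e1 e3 e4 e5 g"
    and "X2 \<equiv> \<lambda>a1 a2 a3 a4 a5 b1 b2 b3 b4 b5. CB False a1 a2 a3 a4 a5 b1 b2 b3 b4 b5 e1 e2 e3 e4 e5 g"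
    and "X3 \<equiv> \<lambda>a1 a2 a3 a4 a5 b1 b2 b3 b4 b5. CB True a2 a1 a3 a4 a5 b2 b1 b3 b4 b5 e2 e1 e3 e4 e5 g"
  shows "\<not> (X0 a1 a2 a3 a4 a5 b1 b2 b3 b4 b5 \<and> X1 a1 a2 a3 a4 a5 b1 b2 b3 b4 b5)"
   "\<not> (X0 a1 a2 a3 a4 a5 b1 b2 b3 b4 b5 \<and> X1 b1 b2 b3 b4 b5 a1 a2 a3 a4 a5)"
   "\<not> (X0 a1 a2 a3 a4 a5 b1 b2 b3 b4 b5 \<and> X2 a1 a2 a3 a4 a5 b1 b2 b3 b4 b5)"
   "\<not> (X0 a1 a2 a3 a4 a5 b1 b2 b3 b4 b5 \<and> X2 b1 b2 b3 b4 b5 a1 a2 a3 a4 a5)"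
   "\<not> (X0 a1 a2 a3 a4 a5 b1 b2 b3 b4 b5 \<and> X3 a1 a2 a3 a4 a5 b1 b2 b3 b4 b5)"
   "\<not> (X0 a1 a2 a3 a4 a5 b1 b2 b3 b4 b5 \<and> X3 b1 b2 b3 b4 b5 a1 a2 a3 a4 a5)"
   "\<not> (X1 a1 a2 a3 a4 a5 b1 b2 b3 b4 b5 \<and> X2 a1 a2 a3 a4 a5 b1 b2 b3 b4 b5)"
   "\<not> (X1 a1 a2 a3 a4 a5 b1 b2 b3 b4 b5 \<and> X2 b1 b2 b3 b4 b5 a1 a2 a3 a4 a5)"
   "\<not> (X1 a1 a2 a3 a4 a5 b1 b2 b3 b4 b5 \<and> X3 a1 a2 a3 a4 a5 b1 b2 b3 b4 b5)"
   "\<not> (X1 a1 a2 a3 a4 a5 b1 b2 b3 b4 b5 \<and> X3 b1 b2 b3 b4 b5 a1 a2 a3 a4 a5)"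
   "\<not> (X2 a1 a2 a3 a4 a5 b1 b2 b3 b4 b5 \<and> X3 a1 a2 a3 a4 a5 b1 b2 b3 b4 b5)"
   "\<not> (X2 a1 a2 a3 a4 a5 b1 b2 b3 b4 b5 \<and> X3 b1 b2 b3 b4 b5 a1 a2 a3 a4 a5)"
  using assms unfolding CA_def CB_def min_def by (auto split: if_splits)

lemma disj2:
  fixes a1 a2 a3 a4 a5 b1 b2 b3 b4 b5 e1 e2 e3 e4 e5 g :: real
  assumes "g>0"
  shows
   "\<not> ((CA False a1 a2 a3 a4 a5 b1 b2 b3 b4 b5 e1 e2 e3 e4 e5 g) \<and> (CA True a2 a1 a3 a4 a5 b2 b1 b3 b4 b5 e2 e1 e3 e4 e5 g))"
   "\<not> ((CA False a1 a2 a3 a4 a5 b1 b2 b3 b4 b5 e1 e2 e3 e4 e5 g) \<and> (CA True b2 b1 b3 b4 b5 a2 a1 a3 a4 a5 e2 e1 e3 e4 e5 g))"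
   "\<not> ((CA False a1 a2 a3 a4 a5 b1 b2 b3 b4 b5 e1 e2 e3 e4 e5 g) \<and> (CB False a1 a2 a3 a4 a5 b1 b2 b3 b4 b5 e1 e2 e3 e4 e5 g))"
   "\<not> ((CA False a1 a2 a3 a4 a5 b1 b2 b3 b4 b5 e1 e2 e3 e4 e5 g) \<and> (CB False b1 b2 b3 b4 b5 a1 a2 a3 a4 a5 e1 e2 e3 e4 e5 g))"
   "\<not> ((CA False a1 a2 a3 a4 a5 b1 b2 b3 b4 b5 e1 e2 e3 e4 e5 g) \<and> (CB True a2 a1 a3 a4 a5 b2 b1 b3 b4 b5 e2 e1 e3 e4 e5 g))"
   "\<not> ((CA False a1 a2 a3 a4 a5 b1 b2 b3 b4 b5 e1 e2 e3 e4 e5 g) \<and> (CB True b2 b1 b3 b4 b5 a2 a1 a3 a4 a5 e2 e1 e3 e4 e5 g))"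
   "\<not> ((CA True a2 a1 a3 a4 a5 b2 b1 b3 b4 b5 e2 e1 e3 e4 e5 g) \<and> (CA False a1 a2 a3 a4 a5 b1 b2 b3 b4 b5 e1 e2 e3 e4 e5 g))"
   "\<not> ((CA True a2 a1 a3 a4 a5 b2 b1 b3 b4 b5 e2 e1 e3 e4 e5 g) \<and> (CA False b1 b2 b3 b4 b5 a1 a2 a3 a4 a5 e1 e2 e3 e4 e5 g))"
   "\<not> ((CA True a2 a1 a3 a4 a5 b2 b1 b3 b4 b5 e2 e1 e3 e4 e5 g) \<and> (CB False a1 a2 a3 a4 a5 b1 b2 b3 b4 b5 e1 e2 e3 e4 e5 g))"
   "\<not> ((CA True a2 a1 a3 a4 a5 b2 b1 b3 b4 b5 e2 e1 e3 e4 e5 g) \<and> (CB False b1 b2 b3 b4 b5 a1 a2 a3 a4 a5 e1 e2 e3 e4 e5 g))"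
   "\<not> ((CA True a2 a1 a3 a4 a5 b2 b1 b3 b4 b5 e2 e1 e3 e4 e5 g) \<and> (CB True a2 a1 a3 a4 a5 b2 b1 b3 b4 b5 e2 e1 e3 e4 e5 g))"
   "\<not> ((CA True a2 a1 a3 a4 a5 b2 b1 b3 b4 b5 e2 e1 e3 e4 e5 g) \<and> (CB True b2 b1 b3 b4 b5 a2 a1 a3 a4 a5 e2 e1 e3 e4 e5 g))"
   "\<not> ((CB False a1 a2 a3 a4 a5 b1 b2 b3 b4 b5 e1 e2 e3 e4 e5 g) \<and> (CA False a1 a2 a3 a4 a5 b1 b2 b3 b4 b5 e1 e2 e3 e4 e5 g))"
   "\<not> ((CB False a1 a2 a3 a4 a5 b1 b2 b3 b4 b5 e1 e2 e3 e4 e5 g) \<and> (CA False b1 b2 b3 b4 b5 a1 a2 a3 a4 a5 e1 e2 e3 e4 e5 g))"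
   "\<not> ((CB False a1 a2 a3 a4 a5 b1 b2 b3 b4 b5 e1 e2 e3 e4 e5 g) \<and> (CA True a2 a1 a3 a4 a5 b2 b1 b3 b4 b5 e2 e1 e3 e4 e5 g))"
   "\<not> ((CB False a1 a2 a3 a4 a5 b1 b2 b3 b4 b5 e1 e2 e3 e4 e5 g) \<and> (CA True b2 b1 b3 b4 b5 a2 a1 a3 a4 a5 e2 e1 e3 e4 e5 g))"
   "\<not> ((CB False a1 a2 a3 a4 a5 b1 b2 b3 b4 b5 e1 e2 e3 e4 e5 g) \<and> (CB True a2 a1 a3 a4 a5 b2 b1 b3 b4 b5 e2 e1 e3 e4 e5 g))"
   "\<not> ((CB False a1 a2 a3 a4 a5 b1 b2 b3 b4 b5 e1 e2 e3 e4 e5 g) \<and> (CB True b2 b1 b3 b4 b5 a2 a1 a3 a4 a5 e2 e1 e3 e4 e5 g))"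
   "\<not> ((CB True a2 a1 a3 a4 a5 b2 b1 b3 b4 b5 e2 e1 e3 e4 e5 g) \<and> (CA False a1 a2 a3 a4 a5 b1 b2 b3 b4 b5 e1 e2 e3 e4 e5 g))"
   "\<not> ((CB True a2 a1 a3 a4 a5 b2 b1 b3 b4 b5 e2 e1 e3 e4 e5 g) \<and> (CA False b1 b2 b3 b4 b5 a1 a2 a3 a4 a5 e1 e2 e3 e4 e5 g))"
   "\<not> ((CB True a2 a1 a3 a4 a5 b2 b1 b3 b4 b5 e2 e1 e3 e4 e5 g) \<and> (CA True a2 a1 a3 a4 a5 b2 b1 b3 b4 b5 e2 e1 e3 e4 e5 g))"
   "\<not> ((CB True a2 a1 a3 a4 a5 b2 b1 b3 b4 b5 e2 e1 e3 e4 e5 g) \<and> (CA True b2 b1 b3 b4 b5 a2 a1 a3 a4 a5 e2 e1 e3 e4 e5 g))"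
   "\<not> ((CB True a2 a1 a3 a4 a5 b2 b1 b3 b4 b5 e2 e1 e3 e4 e5 g) \<and> (CB False a1 a2 a3 a4 a5 b1 b2 b3 b4 b5 e1 e2 e3 e4 e5 g))"
   "\<not> ((CB True a2 a1 a3 a4 a5 b2 b1 b3 b4 b5 e2 e1 e3 e4 e5 g) \<and> (CB False b1 b2 b3 b4 b5 a1 a2 a3 a4 a5 e1 e2 e3 e4 e5 g))"
  using assms unfolding CA_def CB_def min_def by (auto split: if_splits)

lemma cat:
  fixes a1 a2 a3 a4 a5 b1 b2 b3 b4 b5 e1 e2 e3 e4 e5 g h :: real
  assumes "g>0" "h>0"
  "max (a1+a2) (b1+b2) = e1+e2"
  "max (a1+a3) (b1+b3) = e1+g+e3"
  "max (a1+a4) (b1+b4) = e1+g+h+e4"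
  "max (a1+a5) (b1+b5) = e1+g+h+e5"
  "max (a2+a3) (b2+b3) = e2+g+e3"
  "max (a2+a4) (b2+b4) = e2+g+h+e4"
  "max (a2+a5) (b2+b5) = e2+g+h+e5"
  "max (a3+a4) (b3+b4) = e3+h+e4"
  "max (a3+a5) (b3+b5) = e3+h+e5"
  "max (a4+a5) (b4+b5) = e4+e5"
  shows False
  using assms unfolding max_def by (smt (z3))


definition smat :: "real^5 \<Rightarrow> real^5^5" where
  "smat a = (\<chi> p q. if p = q then 0 else a$p + a$q)"

lemma smat_nth[simp]: "smat a $ p $ q = (if p = q then 0 else a$p + a$q)"
  by (simp add: smat_def)

lemma star_metric_iff: "star_metric D \<longleftrightarrow> (\<exists>a. (\<forall>p. a$p > 0) \<and> D = smat a)"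
  unfolding star_metric_def by (auto simp: vec_eq_iff)

definition tt :: "(5 \<Rightarrow> real) \<Rightarrow> real \<Rightarrow> 5 set \<Rightarrow> real^5^5" where
  "tt e g C = (\<chi> p q. if p = q then 0 else e p + e q + (if (p \<in> C) = (q \<in> C) then 0 else g))"

lemma tt_nth[simp]: "tt e g C $ p $ q = (if p = q then 0 else e p + e q + (if (p \<in> C) = (q \<in> C) then 0 else g))"
  by (simp add: tt_def)

locale five =
  fixes i j k l m :: 5
  assumes dist: "i \<noteq> j" "i \<noteq> k" "i \<noteq> l" "i \<noteq> m" "j \<noteq> k" "j \<noteq> l" "j \<noteq> m"
     "k \<noteq> l" "k \<noteq> m" "l \<noteq> m"
  and univ: "UNIV = {i,j,k,l,m}"
begin

lemma all5: "(\<forall>p. P p) \<longleftrightarrow> P i \<and> P j \<and> P k \<and> P l \<and> P m"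
  using univ by (metis UNIV_I insertE singletonD)

lemma vec5: "(a::real^5) = b \<longleftrightarrow> a$i = b$i \<and> a$j = b$j \<and> a$k = b$k \<and> a$l = b$l \<and> a$m = b$m"
  by (simp add: vec_eq_iff all5)

lemma smat_inj: assumes "smat a = smat b" shows "a = b"
proof -
  have h: "\<And>p q. a$p + a$q = b$p + b$q \<or> p = q"
    using assms by (metis smat_nth)
  show ?thesis unfolding vec5
    using h[of i j] h[of i k] h[of j k] h[of l i] h[of l j] h[of m i] h[of m j] dist by force
qed

lemma smat_eq_iff: "smat a = smat b \<longleftrightarrow> a = b"
  using smat_inj by auto

lemma pos5: "(\<forall>p. a$p > (0::real)) \<longleftrightarrow> POS (a$i) (a$j) (a$k) (a$l) (a$m) 1 1 1 1 1"
  by (simp add: all5 POS_def)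

lemma POS_split: "POS a1 a2 a3 a4 a5 b1 b2 b3 b4 b5 \<longleftrightarrow> POS a1 a2 a3 a4 a5 1 1 1 1 1 \<and> POS b1 b2 b3 b4 b5 1 1 1 1 1"
  by (auto simp: POS_def)

lemma tmix_tt:
  "tmix (smat a) (smat b) = tt e g {i,j} \<longleftrightarrow>
    MX (a$i) (a$j) (a$k) (a$l) (a$m) (b$i) (b$j) (b$k) (b$l) (b$m) (e i) (e j) (e k) (e l) (e m) g"
  unfolding tmix_def MX_def vec_eq_iff all5 using dist
  by (auto simp: ac_simps max.commute)

end

definition alA :: "5 \<Rightarrow> 5 \<Rightarrow> (5 \<Rightarrow> real) \<Rightarrow> real \<Rightarrow> real \<times> real \<Rightarrow> real^5" where
  "alA i j e g z = (\<chi> x. if x = i then e i + fst z else if x = j then e j + snd z else e x + g - fst z)"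
definition beA :: "5 \<Rightarrow> 5 \<Rightarrow> (5 \<Rightarrow> real) \<Rightarrow> real \<Rightarrow> real^5" where
  "beA i j e g = (\<chi> x. if x = i then e i - g else if x = j then e j + g else e x)"
definition QA :: "bool \<Rightarrow> real \<Rightarrow> real \<Rightarrow> real \<Rightarrow> (real \<times> real) set" where
  "QA sl g c d = {z. (if sl then g < fst z else g \<le> fst z) \<and> fst z < c \<and> d < snd z \<and> snd z \<le> - fst z}"
definition cellA :: "5 \<Rightarrow> 5 \<Rightarrow> (5 \<Rightarrow> real) \<Rightarrow> real \<Rightarrow> real \<Rightarrow> bool \<Rightarrow> ((real^5^5) \<times> (real^5^5)) set" where
  "cellA i j e g c sl = (\<lambda>z. (smat (alA i j e g z), smat (beA i j e g))) ` QA sl g c (- e j)"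

definition alB :: "5 \<Rightarrow> 5 \<Rightarrow> (5 \<Rightarrow> real) \<Rightarrow> real \<Rightarrow> real \<times> real \<Rightarrow> real^5" where
  "alB i j e g z = (\<chi> x. if x = i then e i + fst z else if x = j then e j - fst z else e x + g - fst z)"
definition beB :: "5 \<Rightarrow> 5 \<Rightarrow> (5 \<Rightarrow> real) \<Rightarrow> real \<Rightarrow> real \<times> real \<Rightarrow> real^5" where
  "beB i j e g z = (\<chi> x. if x = i then e i + snd z else if x = j then e j + g else e x)"
definition QB :: "bool \<Rightarrow> real \<Rightarrow> real \<Rightarrow> real \<Rightarrow> real \<Rightarrow> (real \<times> real) set" where
  "QB sl g c d h = {z. (if sl then g < fst z else g \<le> fst z) \<and> fst z < c \<and> d < snd z \<and> snd z < h}"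
definition cellB :: "5 \<Rightarrow> 5 \<Rightarrow> (5 \<Rightarrow> real) \<Rightarrow> real \<Rightarrow> real \<Rightarrow> bool \<Rightarrow> ((real^5^5) \<times> (real^5^5)) set" where
  "cellB i j e g c sl = (\<lambda>z. (smat (alB i j e g z), smat (beB i j e g z))) ` QB sl g c (- e i) (- g)"

lemma linL: "linear (\<lambda>z::real\<times>real. (fst z *\<^sub>R M1 + snd z *\<^sub>R M2, fst z *\<^sub>R M3 + snd z *\<^sub>R M4))"
  by (rule linearI) (auto simp: algebra_simps)

lemma smat_0[simp]: "smat 0 = 0"
  by (simp add: vec_eq_iff)

lemma smat_lin: "smat (a + c *\<^sub>R d1 + c' *\<^sub>R d2) = smat a + c *\<^sub>R smat d1 + c' *\<^sub>R smat d2"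
  by (simp add: vec_eq_iff algebra_simps)

context five begin

lemma memA:
  "(smat a, smat b) \<in> cellA i j e g (g + min (e k) (min (e l) (e m))) sl \<longleftrightarrow>
   CA sl (a$i) (a$j) (a$k) (a$l) (a$m) (b$i) (b$j) (b$k) (b$l) (b$m) (e i) (e j) (e k) (e l) (e m) g"
proof
  assume "(smat a, smat b) \<in> cellA i j e g (g + min (e k) (min (e l) (e m))) sl"
  then obtain z where z: "z \<in> QA sl g (g + min (e k) (min (e l) (e m))) (- e j)"
    "a = alA i j e g z" "b = beA i j e g" unfolding cellA_def by (auto simp: smat_eq_iff)
  then show "CA sl (a$i) (a$j) (a$k) (a$l) (a$m) (b$i) (b$j) (b$k) (b$l) (b$m) (e i) (e j) (e k) (e l) (e m) g"
    using dist unfolding CA_def QA_def alA_def beA_def by auto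
next
  assume c: "CA sl (a$i) (a$j) (a$k) (a$l) (a$m) (b$i) (b$j) (b$k) (b$l) (b$m) (e i) (e j) (e k) (e l) (e m) g"
  let ?z = "(a$i - e i, a$j - e j)"
  have ha: "a = alA i j e g ?z" and hb: "b = beA i j e g" using c dist unfolding vec5 CA_def alA_def beA_def by auto
  have zq: "?z \<in> QA sl g (g + min (e k) (min (e l) (e m))) (- e j)" using c unfolding CA_def QA_def by auto
  have "(smat a, smat b) = (\<lambda>z. (smat (alA i j e g z), smat (beA i j e g))) ?z"
    using arg_cong[OF ha, of smat] arg_cong[OF hb, of smat] by simp
  then show "(smat a, smat b) \<in> cellA i j e g (g + min (e k) (min (e l) (e m))) sl"
    unfolding cellA_def using zq by blast
qed

lemma memB:
  "(smat a, smat b) \<in> cellB i j e g (min (e j) (g + min (e k) (min (e l) (e m)))) sl \<longleftrightarrow>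
   CB sl (a$i) (a$j) (a$k) (a$l) (a$m) (b$i) (b$j) (b$k) (b$l) (b$m) (e i) (e j) (e k) (e l) (e m) g"
proof
  assume "(smat a, smat b) \<in> cellB i j e g (min (e j) (g + min (e k) (min (e l) (e m)))) sl"
  then obtain z where z: "z \<in> QB sl g (min (e j) (g + min (e k) (min (e l) (e m)))) (- e i) (- g)"
    "a = alB i j e g z" "b = beB i j e g z" unfolding cellB_def by (auto simp: smat_eq_iff)
  then show "CB sl (a$i) (a$j) (a$k) (a$l) (a$m) (b$i) (b$j) (b$k) (b$l) (b$m) (e i) (e j) (e k) (e l) (e m) g"
    using dist unfolding CB_def QB_def alB_def beB_def by auto
next
  assume c: "CB sl (a$i) (a$j) (a$k) (a$l) (a$m) (b$i) (b$j) (b$k) (b$l) (b$m) (e i) (e j) (e k) (e l) (e m) g"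
  let ?z = "(a$i - e i, b$i - e i)"
  have ha: "a = alB i j e g ?z" and hb: "b = beB i j e g ?z" using c dist unfolding vec5 CB_def alB_def beB_def by auto
  have zq: "?z \<in> QB sl g (min (e j) (g + min (e k) (min (e l) (e m)))) (- e i) (- g)"
    using c unfolding CB_def QB_def by auto
  have "(smat a, smat b) = (\<lambda>z. (smat (alB i j e g z), smat (beB i j e g z))) ?z"
    using arg_cong[OF ha, of smat] arg_cong[OF hb, of smat] by simp
  then show "(smat a, smat b) \<in> cellB i j e g (min (e j) (g + min (e k) (min (e l) (e m)))) sl"
    unfolding cellB_def using zq by blast
qed

lemma polyA:
  assumes "g > 0" "\<forall>p. e p > 0" "e j > g"
  shows "polygon2 (cellA i j e g (g + min (e k) (min (e l) (e m))) sl)"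
proof -
  define d1 where "d1 = (\<chi> x::5. if x = i then 1 else if x = j then 0 else (-1::real))"
  define d2 where "d2 = (\<chi> x::5. if x = j then 1 else (0::real))"
  define L where "L = (\<lambda>z::real\<times>real. (fst z *\<^sub>R smat d1 + snd z *\<^sub>R smat d2, fst z *\<^sub>R (0::real^5^5) + snd z *\<^sub>R 0))"
  define c0 where "c0 = (smat (alA i j e g (0,0)), smat (beA i j e g))"
  have eq: "(\<lambda>z. (smat (alA i j e g z), smat (beA i j e g))) = (\<lambda>z. c0 + L z)"
  proof
    fix z :: "real \<times> real"
    have "alA i j e g z = alA i j e g (0,0) + fst z *\<^sub>R d1 + snd z *\<^sub>R d2"
      using dist unfolding vec5 alA_def d1_def d2_def by auto
    then show "(smat (alA i j e g z), smat (beA i j e g)) = c0 + L z"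
      unfolding c0_def L_def by (simp add: smat_lin)
  qed
  have lin: "linear L" unfolding L_def by (rule linL)
  have inj: "inj L"
  proof (rule injI)
    fix z z' assume "L z = L z'"
    then have h: "fst (L z) $ k $ l = fst (L z') $ k $ l" "fst (L z) $ j $ k = fst (L z') $ j $ k" by auto
    then show "z = z'" using dist unfolding L_def d1_def d2_def by (auto simp: prod_eq_iff)
  qed
  have "goodQ (QA sl g (g + min (e k) (min (e l) (e m))) (- e j))"
    unfolding QA_def by (rule shapeA) (use assms in auto)
  then show ?thesis unfolding cellA_def eq by (rule poly2_image[OF lin inj])
qed

lemma polyB:
  assumes "g > 0" "\<forall>p. e p > 0" "e j > g" "e i > g"
  shows "polygon2 (cellB i j e g (min (e j) (g + min (e k) (min (e l) (e m)))) sl)"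
proof -
  define d1 where "d1 = (\<chi> x::5. if x = i then 1 else if x = j then -1 else (-1::real))"
  define d2 where "d2 = (\<chi> x::5. if x = i then 1 else (0::real))"
  define L where "L = (\<lambda>z::real\<times>real. (fst z *\<^sub>R smat d1 + snd z *\<^sub>R (0::real^5^5), fst z *\<^sub>R 0 + snd z *\<^sub>R smat d2))"
  define c0 where "c0 = (smat (alB i j e g (0,0)), smat (beB i j e g (0,0)))"
  have eq: "(\<lambda>z. (smat (alB i j e g z), smat (beB i j e g z))) = (\<lambda>z. c0 + L z)"
  proof
    fix z :: "real \<times> real"
    have "alB i j e g z = alB i j e g (0,0) + fst z *\<^sub>R d1 + snd z *\<^sub>R 0"
      using dist unfolding vec5 alB_def d1_def by auto
    moreover have "beB i j e g z = beB i j e g (0,0) + fst z *\<^sub>R 0 + snd z *\<^sub>R d2"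
      using dist unfolding vec5 beB_def d2_def by auto
    ultimately show "(smat (alB i j e g z), smat (beB i j e g z)) = c0 + L z"
      unfolding c0_def L_def by (simp only: smat_lin) simp
  qed
  have lin: "linear L" unfolding L_def by (rule linL)
  have inj: "inj L"
  proof (rule injI)
    fix z z' assume "L z = L z'"
    then have h: "fst (L z) $ k $ l = fst (L z') $ k $ l" "snd (L z) $ i $ j = snd (L z') $ i $ j" by auto
    then show "z = z'" using dist unfolding L_def d1_def d2_def by (auto simp: prod_eq_iff)
  qed
  have "goodQ (QB sl g (min (e j) (g + min (e k) (min (e l) (e m)))) (- e i) (- g))"
    unfolding QB_def by (rule shapeB) (use assms in auto)
  then show ?thesis unfolding cellB_def eq by (rule poly2_image[OF lin inj])
qed

end

lemma five_swap: "five i j k l m \<Longrightarrow> five j i k l m"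
  unfolding five_def by (auto simp: insert_commute)

context five begin

lemma fiber_iff: "(D, Db) \<in> fiber (tt e g {i,j}) \<longleftrightarrow> (\<exists>a b. D = smat a \<and> Db = smat b \<and>
   POS (a$i) (a$j) (a$k) (a$l) (a$m) (b$i) (b$j) (b$k) (b$l) (b$m) \<and>
   MX (a$i) (a$j) (a$k) (a$l) (a$m) (b$i) (b$j) (b$k) (b$l) (b$m) (e i) (e j) (e k) (e l) (e m) g)"
proof
  assume "(D, Db) \<in> fiber (tt e g {i,j})"
  then obtain a b where "\<forall>p. a$p > 0" "D = smat a" "\<forall>p. b$p > 0" "Db = smat b" "tmix D Db = tt e g {i,j}"
    unfolding fiber_def star_metric_iff by blast
  then show "\<exists>a b. D = smat a \<and> Db = smat b \<and>
   POS (a$i) (a$j) (a$k) (a$l) (a$m) (b$i) (b$j) (b$k) (b$l) (b$m) \<and>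
   MX (a$i) (a$j) (a$k) (a$l) (a$m) (b$i) (b$j) (b$k) (b$l) (b$m) (e i) (e j) (e k) (e l) (e m) g"
    using tmix_tt by (auto simp: POS_def)
next
  assume "\<exists>a b. D = smat a \<and> Db = smat b \<and>
   POS (a$i) (a$j) (a$k) (a$l) (a$m) (b$i) (b$j) (b$k) (b$l) (b$m) \<and>
   MX (a$i) (a$j) (a$k) (a$l) (a$m) (b$i) (b$j) (b$k) (b$l) (b$m) (e i) (e j) (e k) (e l) (e m) g"
  then obtain a b where h: "D = smat a" "Db = smat b" "POS (a$i) (a$j) (a$k) (a$l) (a$m) (b$i) (b$j) (b$k) (b$l) (b$m)"
   "MX (a$i) (a$j) (a$k) (a$l) (a$m) (b$i) (b$j) (b$k) (b$l) (b$m) (e i) (e j) (e k) (e l) (e m) g" by blast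
  have "\<forall>p. a$p > 0" "\<forall>p. b$p > 0" using h(3) unfolding all5 POS_def by auto
  then show "(D, Db) \<in> fiber (tt e g {i,j})"
    unfolding fiber_def star_metric_iff using h tmix_tt by blast
qed

definition X :: "nat \<Rightarrow> (5 \<Rightarrow> real) \<Rightarrow> real \<Rightarrow> real^5 \<Rightarrow> real^5 \<Rightarrow> bool" where
  "X n e g a b = (if n = 0 then CA False (a$i) (a$j) (a$k) (a$l) (a$m) (b$i) (b$j) (b$k) (b$l) (b$m) (e i) (e j) (e k) (e l) (e m) g
     else if n = 1 then CA True (a$j) (a$i) (a$k) (a$l) (a$m) (b$j) (b$i) (b$k) (b$l) (b$m) (e j) (e i) (e k) (e l) (e m) g
     else if n = 2 then CB False (a$i) (a$j) (a$k) (a$l) (a$m) (b$i) (b$j) (b$k) (b$l) (b$m) (e i) (e j) (e k) (e l) (e m) g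
     else CB True (a$j) (a$i) (a$k) (a$l) (a$m) (b$j) (b$i) (b$k) (b$l) (b$m) (e j) (e i) (e k) (e l) (e m) g)"

definition PP :: "(5 \<Rightarrow> real) \<Rightarrow> real \<Rightarrow> nat \<Rightarrow> ((real^5^5) \<times> (real^5^5)) set" where
  "PP e g n = (if n = 0 then cellA i j e g (g + min (e k) (min (e l) (e m))) False
     else if n = 1 then cellA j i e g (g + min (e k) (min (e l) (e m))) True
     else if n = 2 then cellB i j e g (min (e j) (g + min (e k) (min (e l) (e m)))) False
     else cellB j i e g (min (e i) (g + min (e k) (min (e l) (e m)))) True)"

lemma PP_form: "x \<in> PP e g n \<Longrightarrow> \<exists>a b. x = (smat a, smat b)"
  unfolding PP_def cellA_def cellB_def by (auto split: if_splits)

lemma memPP: "n < 4 \<Longrightarrow> (smat a, smat b) \<in> PP e g n \<longleftrightarrow> X n e g a b"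
proof -
  assume n: "n < 4"
  interpret sw: five j i k l m using five_swap[OF five_axioms] .
  have "n = 0 \<or> n = 1 \<or> n = 2 \<or> n = 3" using n by auto
  then show ?thesis
  proof (elim disjE)
    assume "n = 0" then show ?thesis unfolding PP_def X_def using memA by simp
  next
    assume "n = 1" then show ?thesis unfolding PP_def X_def using sw.memA by simp
  next
    assume "n = 2" then show ?thesis unfolding PP_def X_def using memB by simp
  next
    assume "n = 3" then show ?thesis unfolding PP_def X_def using sw.memB by simp
  qed
qed

lemma memU: "n < 4 \<Longrightarrow> (smat a, smat b) \<in> PP e g n \<union> prod.swap ` PP e g n \<longleftrightarrow> X n e g a b \<or> X n e g b a"
proof -
  assume n: "n < 4"
  have "(smat a, smat b) \<in> prod.swap ` PP e g n \<longleftrightarrow> (smat b, smat a) \<in> PP e g n"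
    by (force simp: image_iff)
  then show ?thesis using memPP[OF n] by auto
qed

lemma formU: "x \<in> PP e g n \<union> prod.swap ` PP e g n \<Longrightarrow> \<exists>a b. x = (smat a, smat b)"
  using PP_form by fastforce

lemma X_ok:
  assumes "g > 0" "\<forall>p. e p > 0" "e i > g" "e j > g" "n < 4" "X n e g a b"
  shows "POS (a$i) (a$j) (a$k) (a$l) (a$m) (b$i) (b$j) (b$k) (b$l) (b$m) \<and>
   MX (a$i) (a$j) (a$k) (a$l) (a$m) (b$i) (b$j) (b$k) (b$l) (b$m) (e i) (e j) (e k) (e l) (e m) g"
proof -
  have ep: "e k > 0" "e l > 0" "e m > 0" using assms(2) by auto
  have "n = 0 \<or> n = 1 \<or> n = 2 \<or> n = 3" using assms by auto
  then show ?thesis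
  proof (elim disjE)
    assume "n = 0"
    then have "CA False (a$i) (a$j) (a$k) (a$l) (a$m) (b$i) (b$j) (b$k) (b$l) (b$m) (e i) (e j) (e k) (e l) (e m) g"
      using assms(6) unfolding X_def by simp
    from CA_ok[OF assms(1,3,4) ep this] show ?thesis .
  next
    assume "n = 1"
    then have "CA True (a$j) (a$i) (a$k) (a$l) (a$m) (b$j) (b$i) (b$k) (b$l) (b$m) (e j) (e i) (e k) (e l) (e m) g"
      using assms(6) unfolding X_def by simp
    from CA_ok[OF assms(1,4,3) ep this] show ?thesis
      by (simp add: POS_def mx_sw12[of "a$i" "a$j" "a$k" "a$l" "a$m" "b$i" "b$j" "b$k" "b$l" "b$m" "e i" "e j" "e k" "e l" "e m" g])
  next
    assume "n = 2"
    then have "CB False (a$i) (a$j) (a$k) (a$l) (a$m) (b$i) (b$j) (b$k) (b$l) (b$m) (e i) (e j) (e k) (e l) (e m) g"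
      using assms(6) unfolding X_def by simp
    from CB_ok[OF assms(1,3,4) ep this] show ?thesis .
  next
    assume "n = 3"
    then have "CB True (a$j) (a$i) (a$k) (a$l) (a$m) (b$j) (b$i) (b$k) (b$l) (b$m) (e j) (e i) (e k) (e l) (e m) g"
      using assms(6) unfolding X_def by simp
    from CB_ok[OF assms(1,4,3) ep this] show ?thesis
      by (simp add: POS_def mx_sw12[of "a$i" "a$j" "a$k" "a$l" "a$m" "b$i" "b$j" "b$k" "b$l" "b$m" "e i" "e j" "e k" "e l" "e m" g])
  qed
qed

lemma X_simps:
 "X 0 e g a b = CA False (a$i) (a$j) (a$k) (a$l) (a$m) (b$i) (b$j) (b$k) (b$l) (b$m) (e i) (e j) (e k) (e l) (e m) g"
 "X 1 e g a b = CA True (a$j) (a$i) (a$k) (a$l) (a$m) (b$j) (b$i) (b$k) (b$l) (b$m) (e j) (e i) (e k) (e l) (e m) g"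
 "X 2 e g a b = CB False (a$i) (a$j) (a$k) (a$l) (a$m) (b$i) (b$j) (b$k) (b$l) (b$m) (e i) (e j) (e k) (e l) (e m) g"
 "X 3 e g a b = CB True (a$j) (a$i) (a$k) (a$l) (a$m) (b$j) (b$i) (b$k) (b$l) (b$m) (e j) (e i) (e k) (e l) (e m) g"
  by (simp_all add: X_def)

lemma X_disj:
  assumes "g > 0" "n < 4" "n' < 4" "n \<noteq> n'"
  shows "\<not> (X n e g a b \<and> X n' e g a b)" "\<not> (X n e g a b \<and> X n' e g b a)"
proof -
  note d1 = disj2[where ?a1.0="a$i" and ?a2.0="a$j" and ?a3.0="a$k" and ?a4.0="a$l" and ?a5.0="a$m" and ?b1.0="b$i" and ?b2.0="b$j" and ?b3.0="b$k" and ?b4.0="b$l" and ?b5.0="b$m" and ?e1.0="e i" and ?e2.0="e j" and ?e3.0="e k" and ?e4.0="e l" and ?e5.0="e m", OF assms(1)]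
  have h1: "\<not> (X 0 e g a b \<and> X 1 e g a b)" "\<not> (X 0 e g a b \<and> X 1 e g b a)" unfolding X_simps using d1 by blast+
  have h2: "\<not> (X 0 e g a b \<and> X 2 e g a b)" "\<not> (X 0 e g a b \<and> X 2 e g b a)" unfolding X_simps using d1 by blast+
  have h3: "\<not> (X 0 e g a b \<and> X 3 e g a b)" "\<not> (X 0 e g a b \<and> X 3 e g b a)" unfolding X_simps using d1 by blast+
  have h4: "\<not> (X 1 e g a b \<and> X 0 e g a b)" "\<not> (X 1 e g a b \<and> X 0 e g b a)" unfolding X_simps using d1 by blast+
  have h5: "\<not> (X 1 e g a b \<and> X 2 e g a b)" "\<not> (X 1 e g a b \<and> X 2 e g b a)" unfolding X_simps using d1 by blast+
  have h6: "\<not> (X 1 e g a b \<and> X 3 e g a b)" "\<not> (X 1 e g a b \<and> X 3 e g b a)" unfolding X_simps using d1 by blast+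
  have h7: "\<not> (X 2 e g a b \<and> X 0 e g a b)" "\<not> (X 2 e g a b \<and> X 0 e g b a)" unfolding X_simps using d1 by blast+
  have h8: "\<not> (X 2 e g a b \<and> X 1 e g a b)" "\<not> (X 2 e g a b \<and> X 1 e g b a)" unfolding X_simps using d1 by blast+
  have h9: "\<not> (X 2 e g a b \<and> X 3 e g a b)" "\<not> (X 2 e g a b \<and> X 3 e g b a)" unfolding X_simps using d1 by blast+
  have h10: "\<not> (X 3 e g a b \<and> X 0 e g a b)" "\<not> (X 3 e g a b \<and> X 0 e g b a)" unfolding X_simps using d1 by blast+
  have h11: "\<not> (X 3 e g a b \<and> X 1 e g a b)" "\<not> (X 3 e g a b \<and> X 1 e g b a)" unfolding X_simps using d1 by blast+
  have h12: "\<not> (X 3 e g a b \<and> X 2 e g a b)" "\<not> (X 3 e g a b \<and> X 2 e g b a)" unfolding X_simps using d1 by blast+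
  have c1: "n = 0 \<or> n = 1 \<or> n = 2 \<or> n = 3" and c2: "n' = 0 \<or> n' = 1 \<or> n' = 2 \<or> n' = 3" using assms by auto
  show "\<not> (X n e g a b \<and> X n' e g a b)" using c1 c2 assms(4)
    by (elim disjE; hypsubst; use h1 h2 h3 h4 h5 h6 h7 h8 h9 h10 h11 h12 in blast)
  show "\<not> (X n e g a b \<and> X n' e g b a)" using c1 c2 assms(4)
    by (elim disjE; hypsubst; use h1 h2 h3 h4 h5 h6 h7 h8 h9 h10 h11 h12 in blast)
qed

theorem fiber_decomp:
  assumes g: "g > 0" and e: "\<forall>p. e p > 0" "e i > g" "e j > g"
  shows "\<exists>P :: nat \<Rightarrow> ((real^5^5) \<times> (real^5^5)) set.
            (\<forall>k<4. polygon2 (P k)) \<and>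
            fiber (tt e g {i,j}) = (\<Union>k<4. P k \<union> prod.swap ` P k) \<and>
            (\<forall>k<4. \<forall>l<4. k \<noteq> l \<longrightarrow>
               (P k \<union> prod.swap ` P k) \<inter> (P l \<union> prod.swap ` P l) = {})"
proof (intro exI conjI allI impI)
  interpret sw: five j i k l m using five_swap[OF five_axioms] .
  fix n :: nat assume n: "n < 4"
  then have "n = 0 \<or> n = 1 \<or> n = 2 \<or> n = 3" by auto
  then show "polygon2 (PP e g n)"
  proof (elim disjE)
    assume "n = 0" then show ?thesis unfolding PP_def using polyA[OF g e(1,3)] by simp
  next
    assume "n = 1" then show ?thesis unfolding PP_def using sw.polyA[OF g e(1,2)] by simp
  next
    assume "n = 2" then show ?thesis unfolding PP_def using polyB[OF g e(1,3,2)] by simp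
  next
    assume "n = 3" then show ?thesis unfolding PP_def using sw.polyB[OF g e(1,2,3)] by simp
  qed
next
  show "fiber (tt e g {i, j}) = (\<Union>k<4. PP e g k \<union> prod.swap ` PP e g k)"
  proof (intro set_eqI iffI)
    fix x assume xf: "x \<in> fiber (tt e g {i, j})"
    obtain D Db where xD: "x = (D, Db)" by (cases x)
    obtain a b where x: "D = smat a" "Db = smat b"
      and pm: "POS (a$i) (a$j) (a$k) (a$l) (a$m) (b$i) (b$j) (b$k) (b$l) (b$m)"
        "MX (a$i) (a$j) (a$k) (a$l) (a$m) (b$i) (b$j) (b$k) (b$l) (b$m) (e i) (e j) (e k) (e l) (e m) g"
      using xf unfolding xD fiber_iff by blast
    have "X 0 e g a b \<or> X 0 e g b a \<or> X 1 e g a b \<or> X 1 e g b a \<or> X 2 e g a b \<or> X 2 e g b a \<or> X 3 e g a b \<or> X 3 e g b a"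
      using fib[OF g pm] unfolding X_simps by blast
    moreover have "0<(4::nat)" "1<(4::nat)" "2<(4::nat)" "3<(4::nat)" by simp_all
    ultimately obtain n where n: "n < 4" "X n e g a b \<or> X n e g b a" by blast
    then have "x \<in> PP e g n \<union> prod.swap ` PP e g n" using memU[OF n(1), where a=a and b=b and e=e and g=g] x xD by simp
    then show "x \<in> (\<Union>k<4. PP e g k \<union> prod.swap ` PP e g k)" using n(1) by blast
  next
    fix x assume "x \<in> (\<Union>k<4. PP e g k \<union> prod.swap ` PP e g k)"
    then obtain n where n: "n < 4" "x \<in> PP e g n \<union> prod.swap ` PP e g n" by blast
    then obtain a b where x: "x = (smat a, smat b)" using formU by blast
    have "X n e g a b \<or> X n e g b a" using memU[OF n(1), where a=a and b=b and e=e and g=g] n(2) x by simp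
    then have "POS (a$i) (a$j) (a$k) (a$l) (a$m) (b$i) (b$j) (b$k) (b$l) (b$m) \<and>
       MX (a$i) (a$j) (a$k) (a$l) (a$m) (b$i) (b$j) (b$k) (b$l) (b$m) (e i) (e j) (e k) (e l) (e m) g"
    proof
      assume "X n e g a b" then show ?thesis using X_ok[OF g e n(1)] by blast
    next
      assume "X n e g b a"
      then have "POS (b$i) (b$j) (b$k) (b$l) (b$m) (a$i) (a$j) (a$k) (a$l) (a$m) \<and>
       MX (b$i) (b$j) (b$k) (b$l) (b$m) (a$i) (a$j) (a$k) (a$l) (a$m) (e i) (e j) (e k) (e l) (e m) g"
        using X_ok[OF g e n(1)] by blast
      then show ?thesis
        by (simp add: POS_def mx_swab[of "b$i" "b$j" "b$k" "b$l" "b$m" "a$i" "a$j" "a$k" "a$l" "a$m" "e i" "e j" "e k" "e l" "e m" g])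
    qed
    then show "x \<in> fiber (tt e g {i, j})" unfolding fiber_iff x by blast
  qed
next
  fix n n' :: nat assume nn: "n < 4" "n' < 4" "n \<noteq> n'"
  show "(PP e g n \<union> prod.swap ` PP e g n) \<inter> (PP e g n' \<union> prod.swap ` PP e g n') = {}"
  proof (rule ccontr)
    assume "(PP e g n \<union> prod.swap ` PP e g n) \<inter> (PP e g n' \<union> prod.swap ` PP e g n') \<noteq> {}"
    then obtain x where x1: "x \<in> PP e g n \<union> prod.swap ` PP e g n" and x2: "x \<in> PP e g n' \<union> prod.swap ` PP e g n'"
      by blast
    then obtain a b where x: "x = (smat a, smat b)" using formU by blast
    have "X n e g a b \<or> X n e g b a" "X n' e g a b \<or> X n' e g b a" using memU nn x x1 x2 by auto
    then show False using X_disj[OF g nn, of e a b] X_disj[OF g nn, of e b a] by blast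
  qed
qed

end


lemma edges_Cons:
  "(\<forall>i. Suc i < length (x#xs) \<longrightarrow> {(x#xs)!i, (x#xs)!Suc i} \<in> E) \<longleftrightarrow>
   (xs \<noteq> [] \<longrightarrow> {x, hd xs} \<in> E) \<and> (\<forall>i. Suc i < length xs \<longrightarrow> {xs!i, xs!Suc i} \<in> E)"
proof
  assume h: "\<forall>i. Suc i < length (x#xs) \<longrightarrow> {(x#xs)!i, (x#xs)!Suc i} \<in> E"
  show "(xs \<noteq> [] \<longrightarrow> {x, hd xs} \<in> E) \<and> (\<forall>i. Suc i < length xs \<longrightarrow> {xs!i, xs!Suc i} \<in> E)"
  proof (intro conjI allI impI)
    assume "xs \<noteq> []" then show "{x, hd xs} \<in> E" using h[rule_format, of 0] by (cases xs) auto
  next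
    fix i assume "Suc i < length xs" then show "{xs!i, xs!Suc i} \<in> E" using h[rule_format, of "Suc i"] by auto
  qed
next
  assume h: "(xs \<noteq> [] \<longrightarrow> {x, hd xs} \<in> E) \<and> (\<forall>i. Suc i < length xs \<longrightarrow> {xs!i, xs!Suc i} \<in> E)"
  show "\<forall>i. Suc i < length (x#xs) \<longrightarrow> {(x#xs)!i, (x#xs)!Suc i} \<in> E"
  proof (intro allI impI)
    fix i assume i: "Suc i < length (x#xs)"
    show "{(x#xs)!i, (x#xs)!Suc i} \<in> E"
    proof (cases i)
      case 0 then show ?thesis using h i by (cases xs) auto
    next
      case (Suc i') then show ?thesis using h i by auto
    qed
  qed
qed

lemma spath_single[simp]: "spath E [x] a b \<longleftrightarrow> a = x \<and> b = x"
  unfolding spath_def by auto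

lemma spath_Cons2: "spath E (x#y#r) a b \<longleftrightarrow> a = x \<and> {x,y} \<in> E \<and> x \<notin> set (y#r) \<and> spath E (y#r) y b"
  unfolding spath_def edges_Cons[of x "y#r"] by auto

lemma spath_hd: "spath E xs a b \<Longrightarrow> \<exists>r. xs = a # r"
  unfolding spath_def by (cases xs) auto

lemma spath_take:
  assumes "spath E xs a b" "k < length xs"
  shows "spath E (take (Suc k) xs) a (xs!k)"
proof -
  have ne: "xs \<noteq> []" using assms(2) by auto
  have l: "length (take (Suc k) xs) = Suc k" using assms(2) by simp
  have "hd (take (Suc k) xs) = a" using assms(1) ne unfolding spath_def by simp
  moreover have "last (take (Suc k) xs) = xs!k"
  proof -
    have "take (Suc k) xs \<noteq> []" using ne by simp
    then have "last (take (Suc k) xs) = take (Suc k) xs ! (length (take (Suc k) xs) - 1)" by (rule last_conv_nth)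
    then show ?thesis using l by simp
  qed
  moreover have "distinct (take (Suc k) xs)" using assms(1) unfolding spath_def by simp
  moreover have "\<forall>i. Suc i < length (take (Suc k) xs) \<longrightarrow> {take (Suc k) xs!i, take (Suc k) xs!Suc i} \<in> E"
    using assms unfolding spath_def l by auto
  ultimately show ?thesis unfolding spath_def using l by auto
qed

locale wpt =
  fixes V :: "'v set" and E :: "'v set set" and w :: "'v set \<Rightarrow> real" and leaf :: "5 \<Rightarrow> 'v"
  assumes tree: "weighted_phylo_tree V E w leaf"
begin

lemma finV: "finite V" and Esub: "E \<subseteq> {{a, b} | a b. a \<in> V \<and> b \<in> V \<and> a \<noteq> b}"
  and uniq: "\<And>a b. a \<in> V \<Longrightarrow> b \<in> V \<Longrightarrow> \<exists>!xs. spath E xs a b"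
  and injl: "inj leaf" and degl: "\<And>p. vdegree E (leaf p) = 1"
  and degi: "\<And>v. v \<in> V \<Longrightarrow> v \<notin> range leaf \<Longrightarrow> vdegree E v \<ge> 3"
  and wpos: "\<And>e. e \<in> E \<Longrightarrow> w e > 0"
  using tree unfolding weighted_phylo_tree_def is_tree_def by auto

lemma leafV: "leaf p \<in> V"
  using tree unfolding weighted_phylo_tree_def by blast

lemma edge_ne: "{x,y} \<in> E \<Longrightarrow> x \<noteq> y \<and> x \<in> V \<and> y \<in> V"
proof -
  assume "{x,y} \<in> E"
  then obtain a b where "{x,y} = {a,b}" "a \<in> V" "b \<in> V" "a \<noteq> b" using Esub by blast
  then show ?thesis by (metis doubleton_eq_iff insert_absorb2 singleton_insert_inj_eq')
qed

lemma spath_V: "spath E xs a b \<Longrightarrow> length xs \<ge> 2 \<Longrightarrow> set xs \<subseteq> V"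
proof
  fix t assume sp: "spath E xs a b" and l: "length xs \<ge> 2" and t: "t \<in> set xs"
  then obtain n where n: "n < length xs" "xs!n = t" by (metis in_set_conv_nth)
  have e: "\<forall>i. Suc i < length xs \<longrightarrow> {xs!i, xs!Suc i} \<in> E" using sp unfolding spath_def by auto
  show "t \<in> V"
  proof (cases "Suc n < length xs")
    case True then show ?thesis using e edge_ne n by blast
  next
    case False
    then have "n = Suc (n - 1)" "Suc (n-1) < length xs" using l n by auto
    then show ?thesis using e[rule_format, of "n-1"] edge_ne n by metis
  qed
qed

lemma path_eq: "spath E xs a b \<Longrightarrow> spath E ys a b \<Longrightarrow> a \<in> V \<Longrightarrow> b \<in> V \<Longrightarrow> xs = ys"
  using uniq by blast

definition nb :: "'v \<Rightarrow> 'v set" where "nb x = {y. {x,y} \<in> E}"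

lemma nb_sym: "y \<in> nb x \<longleftrightarrow> x \<in> nb y"
  unfolding nb_def by (simp add: insert_commute)

lemma nb_fin: "finite (nb x)"
proof -
  have "nb x \<subseteq> V" unfolding nb_def using edge_ne by blast
  then show ?thesis using finV finite_subset by blast
qed

lemma card_nb: "vdegree E x = card (nb x)"
proof -
  have "{e \<in> E. x \<in> e} = (\<lambda>y. {x,y}) ` nb x"
  proof
    show "{e \<in> E. x \<in> e} \<subseteq> (\<lambda>y. {x,y}) ` nb x"
    proof
      fix e assume "e \<in> {e \<in> E. x \<in> e}"
      then obtain a b where "e = {a,b}" "e \<in> E" "x \<in> e" using Esub by blast
      then show "e \<in> (\<lambda>y. {x,y}) ` nb x" unfolding nb_def by (auto simp: insert_commute)
    qed
    show "(\<lambda>y. {x,y}) ` nb x \<subseteq> {e \<in> E. x \<in> e}" unfolding nb_def by auto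
  qed
  moreover have "inj_on (\<lambda>y. {x,y}) (nb x)"
    by (rule inj_onI) (metis doubleton_eq_iff)
  ultimately show ?thesis unfolding vdegree_def by (simp add: card_image)
qed

lemma leaf_nb: "\<exists>y. nb (leaf p) = {y}"
  using degl[of p] card_nb by (metis card_1_singletonE)

lemma leaf_nb_uniq: "{leaf p, y} \<in> E \<Longrightarrow> {leaf p, z} \<in> E \<Longrightarrow> y = z"
proof -
  assume a: "{leaf p, y} \<in> E" "{leaf p, z} \<in> E"
  obtain u where "nb (leaf p) = {u}" using leaf_nb by blast
  then have "y \<in> {u}" "z \<in> {u}" using a unfolding nb_def by (metis mem_Collect_eq)+
  then show "y = z" by simp
qed

lemma int_nb: "v \<in> V \<Longrightarrow> v \<notin> range leaf \<Longrightarrow> card (nb v) \<ge> 3"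
  using degi card_nb by metis

definition reach :: "'v \<Rightarrow> 'v \<Rightarrow> 'v set" where
  "reach x y = {t. \<exists>r. spath E (x#y#r) x t}"

lemma reach_V: "t \<in> reach x y \<Longrightarrow> t \<in> V"
proof -
  assume "t \<in> reach x y"
  then obtain r where sp: "spath E (x#y#r) x t" unfolding reach_def by blast
  then have "last (x#y#r) = t" unfolding spath_def by auto
  then have "t \<in> set (x#y#r)" by (metis last_in_set list.distinct(1))
  then show "t \<in> V" using spath_V[OF sp] by auto
qed

lemma spath_edge: "{x,y} \<in> E \<Longrightarrow> x \<noteq> y \<Longrightarrow> spath E [x,y] x y"
  by (simp add: spath_Cons2)

lemma reach_self: "{x,y} \<in> E \<Longrightarrow> y \<in> reach x y"
proof -
  assume e: "{x,y} \<in> E"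
  then have "spath E [x,y] x y" using edge_ne spath_edge by blast
  then show ?thesis unfolding reach_def by blast
qed

lemma reach_cover: "x \<in> V \<Longrightarrow> t \<in> V \<Longrightarrow> t \<noteq> x \<Longrightarrow> \<exists>y. {x,y} \<in> E \<and> t \<in> reach x y"
proof -
  assume x: "x \<in> V" and t: "t \<in> V" "t \<noteq> x"
  obtain xs where sp: "spath E xs x t" using uniq[OF x t(1)] by blast
  then obtain r where xs: "xs = x # r" using spath_hd[OF sp] by blast
  show ?thesis
  proof (cases r)
    case Nil then have "t = x" using sp xs by simp
    then show ?thesis using t by simp
  next
    case (Cons y r')
    then have "spath E (x#y#r') x t" using sp xs by simp
    moreover then have "{x,y} \<in> E" by (simp add: spath_Cons2)
    ultimately show ?thesis unfolding reach_def by blast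
  qed
qed

lemma reach_disj: "x \<in> V \<Longrightarrow> t \<in> reach x y \<Longrightarrow> t \<in> reach x y' \<Longrightarrow> y = y'"
proof -
  assume x: "x \<in> V" and "t \<in> reach x y" "t \<in> reach x y'"
  then obtain r r' where "spath E (x#y#r) x t" "spath E (x#y'#r') x t" unfolding reach_def by blast
  moreover have "t \<in> V" using \<open>t \<in> reach x y\<close> reach_V by blast
  ultimately have "x#y#r = x#y'#r'" using path_eq[of "x#y#r" x t "x#y'#r'"] x by simp
  then show "y = y'" by simp
qed

lemma reach_leaf: "{x, leaf q} \<in> E \<Longrightarrow> reach x (leaf q) = {leaf q}"
proof
  assume e: "{x, leaf q} \<in> E"
  show "reach x (leaf q) \<subseteq> {leaf q}"
  proof
    fix t assume "t \<in> reach x (leaf q)"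
    then obtain r where sp: "spath E (x#leaf q#r) x t" unfolding reach_def by blast
    show "t \<in> {leaf q}"
    proof (cases r)
      case Nil then show ?thesis using sp by (auto simp: spath_Cons2)
    next
      case (Cons z r')
      then have "{leaf q, z} \<in> E" "x \<noteq> z" using sp by (auto simp: spath_Cons2)
      moreover have "{leaf q, x} \<in> E" using e by (simp add: insert_commute)
      ultimately show ?thesis using leaf_nb_uniq by blast
    qed
  qed
  show "{leaf q} \<subseteq> reach x (leaf q)" using reach_self[OF e] by simp
qed

lemma not_in_path_prefix:
  assumes sp: "spath E (y#z#r) y t" and e: "{x,y} \<in> E" and zx: "z \<noteq> x"
  shows "x \<notin> set (y#z#r)"
proof
  assume xin: "x \<in> set (y#z#r)"
  then obtain k where k: "k < length (y#z#r)" "(y#z#r)!k = x" by (metis in_set_conv_nth)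
  have xy: "x \<noteq> y" "x \<in> V" "y \<in> V" using edge_ne[OF e] by auto
  have "spath E (take (Suc k) (y#z#r)) y x" using spath_take[OF sp k(1)] k(2) by simp
  moreover have "spath E [y,x] y x" using e xy by (auto simp: spath_Cons2 insert_commute)
  ultimately have "take (Suc k) (y#z#r) = [y,x]" using path_eq xy by blast
  then have "length (take (Suc k) (y#z#r)) = 2" by simp
  then have "k = 1" using k(1) by simp
  then show False using k(2) zx by simp
qed

lemma reach_step: "{x,y} \<in> E \<Longrightarrow> reach x y = {y} \<union> (\<Union>z\<in>nb y - {x}. reach y z)"
proof
  assume e: "{x,y} \<in> E"
  show "reach x y \<subseteq> {y} \<union> (\<Union>z\<in>nb y - {x}. reach y z)"
  proof
    fix t assume "t \<in> reach x y"
    then obtain r where sp: "spath E (x#y#r) x t" unfolding reach_def by blast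
    show "t \<in> {y} \<union> (\<Union>z\<in>nb y - {x}. reach y z)"
    proof (cases r)
      case Nil then show ?thesis using sp by (auto simp: spath_Cons2)
    next
      case (Cons z r')
      then have "spath E (y#z#r') y t" "z \<noteq> x" "{y,z} \<in> E" using sp by (auto simp: spath_Cons2)
      then show ?thesis unfolding reach_def nb_def by blast
    qed
  qed
  show "{y} \<union> (\<Union>z\<in>nb y - {x}. reach y z) \<subseteq> reach x y"
  proof
    fix t assume "t \<in> {y} \<union> (\<Union>z\<in>nb y - {x}. reach y z)"
    then show "t \<in> reach x y"
    proof
      assume "t \<in> {y}" then show ?thesis using reach_self[OF e] by simp
    next
      assume "t \<in> (\<Union>z\<in>nb y - {x}. reach y z)"
      then obtain z r where z: "z \<in> nb y" "z \<noteq> x" and sp: "spath E (y#z#r) y t"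
        unfolding reach_def by blast
      have "x \<notin> set (y#z#r)" by (rule not_in_path_prefix[OF sp e z(2)])
      then have "spath E (x#y#z#r) x t" using sp e by (subst spath_Cons2) auto
      then show ?thesis unfolding reach_def by blast
    qed
  qed
qed

lemma reach_not_self: "{y,z} \<in> E \<Longrightarrow> y \<notin> reach y z"
proof
  assume "y \<in> reach y z"
  then obtain r where sp: "spath E (y#z#r) y y" unfolding reach_def by blast
  then have "last (z#r) = y" "y \<notin> set (z#r)" unfolding spath_def by auto
  then show False by (metis last_in_set list.distinct(1))
qed

lemma reach_leaf_ex: "{x,y} \<in> E \<Longrightarrow> \<exists>p. leaf p \<in> reach x y"
proof (induction "card (reach x y)" arbitrary: x y rule: less_induct)
  case less
  show ?case
  proof (cases "y \<in> range leaf")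
    case True then show ?thesis using reach_self[OF less.prems] by auto
  next
    case False
    have yV: "y \<in> V" using edge_ne[OF less.prems] by auto
    have "card (nb y) \<ge> 3" using int_nb[OF yV False] .
    have "nb y - {x} \<noteq> {}"
    proof
      assume "nb y - {x} = {}"
      then have "card (nb y) \<le> card {x}" using card_mono by (metis Diff_eq_empty_iff finite.emptyI finite.insertI)
      then show False using \<open>card (nb y) \<ge> 3\<close> by simp
    qed
    then obtain z where z: "z \<in> nb y" "z \<noteq> x" by blast
    then have ez: "{y,z} \<in> E" unfolding nb_def by auto
    have sub: "reach y z \<subseteq> reach x y" using reach_step[OF less.prems] z by blast
    have "y \<in> reach x y" "y \<notin> reach y z" using reach_self[OF less.prems] reach_not_self[OF ez] by auto
    then have "reach y z \<subset> reach x y" using sub by blast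
    moreover have "finite (reach x y)" using reach_V finV by (meson finite_subset subsetI)
    ultimately have "card (reach y z) < card (reach x y)" by (rule psubset_card_mono[rotated])
    then show ?thesis using less.hyps[OF _ ez] sub by blast
  qed
qed


definition side :: "'v \<Rightarrow> 'v \<Rightarrow> 5 set" where
  "side x y = {p. leaf p \<in> reach x y}"

lemma side_ne: "{x,y} \<in> E \<Longrightarrow> side x y \<noteq> {}"
  using reach_leaf_ex unfolding side_def by blast

lemma side_disj: "x \<in> V \<Longrightarrow> p \<in> side x y \<Longrightarrow> p \<in> side x y' \<Longrightarrow> y = y'"
  unfolding side_def using reach_disj by blast

lemma side_leaf: "{x, leaf q} \<in> E \<Longrightarrow> side x (leaf q) = {q}"
  unfolding side_def using reach_leaf injl by (auto simp: inj_eq)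

lemma side_step: "{x,y} \<in> E \<Longrightarrow> y \<notin> range leaf \<Longrightarrow> side x y = (\<Union>z\<in>nb y - {x}. side y z)"
  unfolding side_def using reach_step[of x y] by auto

lemma side_cover: "x \<in> V \<Longrightarrow> x \<notin> range leaf \<Longrightarrow> \<exists>y\<in>nb x. p \<in> side x y"
proof -
  assume x: "x \<in> V" "x \<notin> range leaf"
  have "leaf p \<noteq> x" using x by auto
  then obtain y where "{x,y} \<in> E" "leaf p \<in> reach x y" using reach_cover[OF x(1) leafV] by metis
  then show ?thesis unfolding side_def nb_def by blast
qed

lemma card2: "a \<in> S \<Longrightarrow> b \<in> S \<Longrightarrow> a \<noteq> b \<Longrightarrow> 2 \<le> card (S::5 set)"
proof -
  assume "a \<in> S" "b \<in> S" "a \<noteq> b"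
  then have "card {a,b} \<le> card S" by (intro card_mono) auto
  then show ?thesis using \<open>a \<noteq> b\<close> by simp
qed

lemma card3: "a \<in> S \<Longrightarrow> b \<in> S \<Longrightarrow> c \<in> S \<Longrightarrow> a \<noteq> b \<Longrightarrow> a \<noteq> c \<Longrightarrow> b \<noteq> c \<Longrightarrow> 3 \<le> card (S::5 set)"
proof -
  assume "a \<in> S" "b \<in> S" "c \<in> S" "a \<noteq> b" "a \<noteq> c" "b \<noteq> c"
  then have "card {a,b,c} \<le> card S" by (intro card_mono) auto
  then show ?thesis using \<open>a \<noteq> b\<close> \<open>a \<noteq> c\<close> \<open>b \<noteq> c\<close> by simp
qed

lemma card4: "a \<in> S \<Longrightarrow> b \<in> S \<Longrightarrow> c \<in> S \<Longrightarrow> d \<in> S \<Longrightarrow> a \<noteq> b \<Longrightarrow> a \<noteq> c \<Longrightarrow> b \<noteq> c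
   \<Longrightarrow> a \<noteq> d \<Longrightarrow> b \<noteq> d \<Longrightarrow> c \<noteq> d \<Longrightarrow> 4 \<le> card (S::5 set)"
proof -
  assume "a \<in> S" "b \<in> S" "c \<in> S" "d \<in> S" "a \<noteq> b" "a \<noteq> c" "b \<noteq> c" "a \<noteq> d" "b \<noteq> d" "c \<noteq> d"
  then have "card {a,b,c,d} \<le> card S" by (intro card_mono) auto
  then show ?thesis using \<open>a \<noteq> b\<close> \<open>a \<noteq> c\<close> \<open>b \<noteq> c\<close> \<open>a \<noteq> d\<close> \<open>b \<noteq> d\<close> \<open>c \<noteq> d\<close> by simp
qed

lemma two_elems: "2 \<le> card A \<Longrightarrow> \<exists>a b. a \<in> A \<and> b \<in> A \<and> a \<noteq> b"
  by (metis One_nat_def Suc_1 card.infinite card_le_Suc0_iff_eq not_less_eq_eq zero_le)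

lemma side_int2:
  assumes e: "{x,y} \<in> E" and y: "y \<notin> range leaf"
  shows "\<exists>p1 p2. p1 \<in> side x y \<and> p2 \<in> side x y \<and> p1 \<noteq> p2"
proof -
  have yV: "y \<in> V" using edge_ne[OF e] by auto
  have "card (nb y - {x}) \<ge> 2" using int_nb[OF yV y] diff_card_le_card_Diff[of "{x}" "nb y"] by simp
  then obtain z1 z2 where z: "z1 \<in> nb y - {x}" "z2 \<in> nb y - {x}" "z1 \<noteq> z2" using two_elems by blast
  then have ez: "{y,z1} \<in> E" "{y,z2} \<in> E" unfolding nb_def by auto
  obtain p1 p2 where p: "p1 \<in> side y z1" "p2 \<in> side y z2" using side_ne[OF ez(1)] side_ne[OF ez(2)] by blast
  have "p1 \<noteq> p2" using side_disj[OF yV] p z(3) by blast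
  moreover have "p1 \<in> side x y" "p2 \<in> side x y" using side_step[OF e y] p z by blast+
  ultimately show ?thesis by blast
qed

lemma two_out:
  assumes "x \<in> V" "x \<notin> range leaf"
  shows "\<exists>y1 y2. y1 \<in> nb x - {par} \<and> y2 \<in> nb x - {par} \<and> y1 \<noteq> y2"
proof -
  have "card (nb x - {par}) \<ge> 2" using int_nb[OF assms] diff_card_le_card_Diff[of "{par}" "nb x"] by simp
  then show ?thesis using two_elems by blast
qed

lemma nbE: "y \<in> nb x \<Longrightarrow> {x,y} \<in> E" unfolding nb_def by auto

lemma twoleaf:
  assumes x: "x \<in> V" "x \<notin> range leaf" and e: "{par,x} \<in> E" and c: "card (side par x) \<le> 2"
  shows "\<exists>i j. i \<noteq> j \<and> nb x = {par, leaf i, leaf j} \<and> side par x = {i,j}"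
proof -
  have S: "side par x = (\<Union>y\<in>nb x - {par}. side x y)" using side_step[OF e x(2)] .
  obtain y1 y2 where y: "y1 \<in> nb x - {par}" "y2 \<in> nb x - {par}" "y1 \<noteq> y2" using two_out[OF x] by blast
  have lf: "y \<in> range leaf" if yy: "y \<in> nb x - {par}" for y
  proof (rule ccontr)
    assume yn: "y \<notin> range leaf"
    obtain p1 p2 where p: "p1 \<in> side x y" "p2 \<in> side x y" "p1 \<noteq> p2" using side_int2[OF nbE yn] yy by blast
    obtain y' where y': "y' \<in> nb x - {par}" "y' \<noteq> y" using y by blast
    obtain p3 where p3: "p3 \<in> side x y'" using side_ne[OF nbE] y' by blast
    have "p3 \<noteq> p1" "p3 \<noteq> p2" using side_disj[OF x(1)] p p3 y' by blast+
    moreover have "p1 \<in> side par x" "p2 \<in> side par x" "p3 \<in> side par x" using S p p3 yy y' by blast+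
    ultimately have "3 \<le> card (side par x)" using card3 p(3) by metis
    then show False using c by simp
  qed
  have only: "nb x - {par} \<subseteq> {y1,y2}"
  proof
    fix y3 assume y3: "y3 \<in> nb x - {par}"
    show "y3 \<in> {y1,y2}"
    proof (rule ccontr)
      assume "y3 \<notin> {y1,y2}"
      have "side x y1 \<noteq> {}" "side x y2 \<noteq> {}" "side x y3 \<noteq> {}"
        using side_ne[OF nbE] y y3 by (meson DiffD1)+
      then obtain p1 p2 p3 where p: "p1 \<in> side x y1" "p2 \<in> side x y2" "p3 \<in> side x y3" by blast
      have "p1 \<noteq> p2" "p1 \<noteq> p3" "p2 \<noteq> p3" using side_disj[OF x(1)] p y \<open>y3 \<notin> {y1,y2}\<close> by blast+
      moreover have "p1 \<in> side par x" "p2 \<in> side par x" "p3 \<in> side par x" using S p y y3 by blast+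
      ultimately have "3 \<le> card (side par x)" using card3 by metis
      then show False using c by simp
    qed
  qed
  obtain i j where ij: "y1 = leaf i" "y2 = leaf j" using lf y by blast
  have "i \<noteq> j" using ij y(3) by blast
  moreover have "nb x - {par} = {leaf i, leaf j}" using only y ij by blast
  moreover have "par \<in> nb x" using e unfolding nb_def by (simp add: insert_commute)
  ultimately have nbx: "nb x = {par, leaf i, leaf j}" by blast
  have "side par x = side x (leaf i) \<union> side x (leaf j)" using S \<open>nb x - {par} = {leaf i, leaf j}\<close> by auto
  also have "\<dots> = {i,j}" using side_leaf nbE y ij by (metis DiffD1 insert_is_Un)
  finally show ?thesis using \<open>i \<noteq> j\<close> nbx by blast
qed


lemma threeleaf:
  assumes x: "x \<in> V" "x \<notin> range leaf" and e: "{par,x} \<in> E" and c: "card (side par x) = 3"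
  shows "(\<exists>k l m. k \<noteq> l \<and> k \<noteq> m \<and> l \<noteq> m \<and> nb x = {par, leaf k, leaf l, leaf m} \<and> side par x = {k,l,m})
     \<or> (\<exists>k y l m. y \<in> V \<and> y \<notin> range leaf \<and> y \<noteq> par \<and> nb x = {par, leaf k, y} \<and> nb y = {x, leaf l, leaf m}
            \<and> k \<noteq> l \<and> k \<noteq> m \<and> l \<noteq> m \<and> side par x = {k,l,m})"
proof -
  have S: "side par x = (\<Union>y\<in>nb x - {par}. side x y)" using side_step[OF e x(2)] .
  have parx: "par \<in> nb x" using e unfolding nb_def by (simp add: insert_commute)
  obtain y1 y2 where y: "y1 \<in> nb x - {par}" "y2 \<in> nb x - {par}" "y1 \<noteq> y2" using two_out[OF x] by blast
  show ?thesis
  proof (cases "\<exists>y\<in>nb x - {par}. y \<notin> range leaf")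
    case True
    then obtain y where yy: "y \<in> nb x - {par}" "y \<notin> range leaf" by blast
    have ey: "{x,y} \<in> E" using yy nbE by blast
    have yV: "y \<in> V" using edge_ne[OF ey] by auto
    obtain p1 p2 where p: "p1 \<in> side x y" "p2 \<in> side x y" "p1 \<noteq> p2" using side_int2[OF ey yy(2)] by blast
    obtain y' where y': "y' \<in> nb x - {par}" "y' \<noteq> y" using y by blast
    obtain p3 where p3: "p3 \<in> side x y'" using side_ne[OF nbE] y' by blast
    have p3d: "p3 \<notin> side x y" using side_disj[OF x(1)] p3 y' by blast
    have only: "nb x - {par} \<subseteq> {y, y'}"
    proof
      fix y3 assume y3: "y3 \<in> nb x - {par}"
      show "y3 \<in> {y,y'}"
      proof (rule ccontr)
        assume n3: "y3 \<notin> {y,y'}"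
        obtain p4 where p4: "p4 \<in> side x y3" using side_ne[OF nbE] y3 by blast
        have "p4 \<noteq> p1" "p4 \<noteq> p2" "p4 \<noteq> p3" using side_disj[OF x(1)] p p3 p4 n3 by blast+
        moreover have "p1 \<in> side par x" "p2 \<in> side par x" "p3 \<in> side par x" "p4 \<in> side par x"
          using S p p3 p4 yy y' y3 by blast+
        moreover have "p3 \<noteq> p1" "p3 \<noteq> p2" using p p3d by blast+
        ultimately have "4 \<le> card (side par x)" using card4 p(3) by metis
        then show False using c by simp
      qed
    qed
    have y'l: "y' \<in> range leaf"
    proof (rule ccontr)
      assume "y' \<notin> range leaf"
      then obtain q1 q2 where q: "q1 \<in> side x y'" "q2 \<in> side x y'" "q1 \<noteq> q2" using side_int2[OF nbE] y' by blast
      have "q1 \<notin> side x y" "q2 \<notin> side x y" using side_disj[OF x(1)] q y' by blast+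
      then have "q1 \<noteq> p1" "q1 \<noteq> p2" "q2 \<noteq> p1" "q2 \<noteq> p2" using p by blast+
      moreover have "p1 \<in> side par x" "p2 \<in> side par x" "q1 \<in> side par x" "q2 \<in> side par x"
        using S p q yy y' by blast+
      ultimately have "4 \<le> card (side par x)" using card4 p(3) q(3) by metis
      then show False using c by simp
    qed
    then obtain k where k: "y' = leaf k" by blast
    have ek: "{x, leaf k} \<in> E" using y' k nbE by blast
    have sk: "side x y' = {k}" using side_leaf[OF ek] k by simp
    have Sx: "side par x = side x y \<union> {k}" using S only yy y' sk by auto
    have kn: "k \<notin> side x y" using p3d p3 sk by simp
    have "card (side par x) = card (side x y) + 1" using Sx kn by (simp add: card_insert_if)
    then have cy: "card (side x y) \<le> 2" using c by simp
    have eyx: "{x,y} \<in> E" using ey .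
    obtain l m where lm: "l \<noteq> m" "nb y = {x, leaf l, leaf m}" "side x y = {l,m}"
      using twoleaf[OF yV yy(2) eyx cy] by blast
    have "k \<noteq> l" "k \<noteq> m" using kn lm by auto
    moreover have "nb x = {par, leaf k, y}" using only parx yy y' k by blast
    moreover have "side par x = {k,l,m}" using Sx lm by auto
    moreover have "y \<noteq> par" using yy by blast
    ultimately show ?thesis using lm yV yy by blast
  next
    case False
    then have allleaf: "\<forall>y\<in>nb x - {par}. y \<in> range leaf" by blast
    obtain k l m where klm: "side par x = {k,l,m}" "k \<noteq> l" "l \<noteq> m" "k \<noteq> m" using c card_3_iff by metis
    have inS: "leaf q \<in> nb x - {par} \<longleftrightarrow> q \<in> side par x" for q
    proof
      assume "leaf q \<in> nb x - {par}"
      then show "q \<in> side par x" using S side_leaf[OF nbE] by blast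
    next
      assume "q \<in> side par x"
      then obtain y where yy: "y \<in> nb x - {par}" "q \<in> side x y" using S by blast
      then obtain q' where "y = leaf q'" using allleaf by blast
      then have "side x y = {q'}" using side_leaf nbE yy by blast
      then show "leaf q \<in> nb x - {par}" using yy \<open>y = leaf q'\<close> by auto
    qed
    have "nb x - {par} = {leaf k, leaf l, leaf m}"
    proof
      show "nb x - {par} \<subseteq> {leaf k, leaf l, leaf m}"
      proof
        fix y assume yy: "y \<in> nb x - {par}"
        then obtain q where "y = leaf q" using allleaf by blast
        then show "y \<in> {leaf k, leaf l, leaf m}" using inS[of q] yy klm by auto
      qed
      show "{leaf k, leaf l, leaf m} \<subseteq> nb x - {par}" using inS klm by auto
    qed
    then have "nb x = {par, leaf k, leaf l, leaf m}" using parx by blast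
    then show ?thesis using klm by blast
  qed
qed

lemma partition:
  assumes u: "u \<in> V" "u \<notin> range leaf" and e: "{u,v} \<in> E"
  shows "card (side v u) + card (side u v) = 5"
proof -
  have evu: "{v,u} \<in> E" using e by (simp add: insert_commute)
  have S: "side v u = (\<Union>y\<in>nb u - {v}. side u y)" using side_step[OF evu u(2)] .
  have un: "side v u \<union> side u v = UNIV"
  proof -
    have "p \<in> side v u \<union> side u v" for p
    proof -
      obtain y where "y \<in> nb u" "p \<in> side u y" using side_cover[OF u] by blast
      then show ?thesis using S by (cases "y = v") auto
    qed
    then show ?thesis by blast
  qed
  have dj: "side v u \<inter> side u v = {}"
    using S side_disj[OF u(1)] by blast
  have "card (side v u \<union> side u v) = card (side v u) + card (side u v)"
    by (rule card_Un_disjoint) (use dj in auto)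
  then show ?thesis using un by simp
qed


lemma partition2:
  assumes u: "u \<in> V" "u \<notin> range leaf" and e: "{u,v} \<in> E"
  shows "side v u \<union> side u v = UNIV" "side v u \<inter> side u v = {}"
proof -
  have evu: "{v,u} \<in> E" using e by (simp add: insert_commute)
  have S: "side v u = (\<Union>y\<in>nb u - {v}. side u y)" using side_step[OF evu u(2)] .
  have "p \<in> side v u \<union> side u v" for p
  proof -
    obtain y where "y \<in> nb u" "p \<in> side u y" using side_cover[OF u] by blast
    then show ?thesis using S by (cases "y = v") auto
  qed
  then show "side v u \<union> side u v = UNIV" by blast
  show "side v u \<inter> side u v = {}"
    using S side_disj[OF u(1)] by blast
qed

lemma side_ge2:
  assumes "{x,y} \<in> E" "y \<notin> range leaf"
  shows "2 \<le> card (side x y)"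
  using side_int2[OF assms] card2 by metis

lemma path_length_Cons2: "path_length w (x#y#r) = w {x,y} + path_length w (y#r)"
proof -
  have "path_length w (x#y#r) = (\<Sum>i<Suc (length r). w {(x#y#r)!i, (x#y#r)!Suc i})"
    unfolding path_length_def by simp
  also have "\<dots> = w {x,y} + (\<Sum>i<length r. w {(x#y#r)!Suc i, (x#y#r)!Suc (Suc i)})"
    by (subst sum.lessThan_Suc_shift) simp
  also have "\<dots> = w {x,y} + path_length w (y#r)"
    unfolding path_length_def by simp
  finally show ?thesis .
qed

lemma path_length_single: "path_length w [x] = 0"
  unfolding path_length_def by simp

lemma T_diag: "realizes E w leaf T \<Longrightarrow> T$p$p = 0"
proof -
  assume r: "realizes E w leaf T"
  have "spath E [leaf p] (leaf p) (leaf p)" by simp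
  then have "T$p$p = path_length w [leaf p]" using r unfolding realizes_def by blast
  then show ?thesis by (simp add: path_length_single)
qed

lemma T_A:
  assumes r: "realizes E w leaf T" and e: "{x, leaf p} \<in> E" "{x, leaf q} \<in> E" and pq: "p \<noteq> q"
  shows "T$p$q = w {x, leaf p} + w {x, leaf q}"
proof -
  have n: "leaf p \<noteq> x" "x \<noteq> leaf q" "leaf p \<noteq> leaf q" using edge_ne e pq injl by (auto simp: inj_eq)
  have "spath E [leaf p, x, leaf q] (leaf p) (leaf q)"
    using e n by (auto simp: spath_Cons2 insert_commute)
  then have "T$p$q = path_length w [leaf p, x, leaf q]" using r unfolding realizes_def by blast
  then show ?thesis by (simp add: path_length_Cons2 path_length_single insert_commute)
qed

lemma T_B:
  assumes r: "realizes E w leaf T" and e: "{x, leaf p} \<in> E" "{x,y} \<in> E" "{y, leaf q} \<in> E"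
    and nl: "x \<notin> range leaf" "y \<notin> range leaf" and pq: "p \<noteq> q"
  shows "T$p$q = w {x, leaf p} + w {x,y} + w {y, leaf q}"
proof -
  have n: "leaf p \<noteq> x" "leaf p \<noteq> y" "leaf p \<noteq> leaf q" "x \<noteq> y" "x \<noteq> leaf q" "y \<noteq> leaf q"
    using edge_ne[OF e(2)] nl pq injl by (auto simp: inj_eq)
  have "spath E [leaf p, x, y, leaf q] (leaf p) (leaf q)"
    using e n by (auto simp: spath_Cons2 insert_commute)
  then have "T$p$q = path_length w [leaf p, x, y, leaf q]" using r unfolding realizes_def by blast
  then show ?thesis by (simp add: path_length_Cons2 path_length_single insert_commute)
qed

lemma T_C:
  assumes r: "realizes E w leaf T" and e: "{x, leaf p} \<in> E" "{x,y} \<in> E" "{y,z} \<in> E" "{z, leaf q} \<in> E"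
    and nl: "x \<notin> range leaf" "y \<notin> range leaf" "z \<notin> range leaf" and xz: "x \<noteq> z" and pq: "p \<noteq> q"
  shows "T$p$q = w {x, leaf p} + w {x,y} + w {y,z} + w {z, leaf q}"
proof -
  have n: "leaf p \<noteq> x" "leaf p \<noteq> y" "leaf p \<noteq> z" "leaf p \<noteq> leaf q" "x \<noteq> y" "x \<noteq> leaf q"
    "y \<noteq> z" "y \<noteq> leaf q" "z \<noteq> leaf q"
    using edge_ne[OF e(2)] edge_ne[OF e(3)] nl pq injl by (auto simp: inj_eq)
  have "spath E [leaf p, x, y, z, leaf q] (leaf p) (leaf q)"
    using e n xz by (auto simp: spath_Cons2 insert_commute)
  then have "T$p$q = path_length w [leaf p, x, y, z, leaf q]" using r unfolding realizes_def by blast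
  then show ?thesis by (simp add: path_length_Cons2 path_length_single insert_commute add.assoc)
qed

lemma vertices_A:
  assumes u: "u \<in> V" "u \<notin> range leaf" and nbu: "nb u = {v, leaf i, leaf j}"
    and nbv: "nb v = {u, leaf k, leaf l, leaf m}"
  shows "V \<subseteq> {u,v} \<union> range leaf"
proof
  fix x assume x: "x \<in> V"
  show "x \<in> {u,v} \<union> range leaf"
  proof (cases "x = u")
    case False
    then obtain y where y: "{u,y} \<in> E" "x \<in> reach u y" using reach_cover[OF u(1) x] by metis
    then have "y \<in> nb u" unfolding nb_def by simp
    then have "y = v \<or> y = leaf i \<or> y = leaf j" using nbu by auto
    then show ?thesis
    proof (elim disjE)
      assume yv: "y = v"
      have "reach u v = {v} \<union> (\<Union>z\<in>nb v - {u}. reach v z)" using reach_step y yv by blast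
      moreover have "reach v z \<subseteq> range leaf" if "z \<in> nb v - {u}" for z
      proof -
        have "z \<in> {leaf k, leaf l, leaf m}" using that nbv by auto
        then obtain q where "z = leaf q" by blast
        then show ?thesis using reach_leaf[of v q] nbE that by auto
      qed
      ultimately show ?thesis using y yv by blast
    next
      assume "y = leaf i" then show ?thesis using y reach_leaf by auto
    next
      assume "y = leaf j" then show ?thesis using y reach_leaf by auto
    qed
  qed simp
qed

lemma only_internal_A:
  assumes u: "u \<in> V" "u \<notin> range leaf" and nbu: "nb u = {v, leaf i, leaf j}"
    and nbv: "nb v = {u, leaf k, leaf l, leaf m}" and f: "f \<in> E" "internal_edge leaf f"
  shows "f = {u,v}"
proof -
  obtain a b where ab: "f = {a,b}" "a \<in> V" "b \<in> V" "a \<noteq> b" using f(1) Esub by blast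
  have "a \<notin> range leaf" "b \<notin> range leaf" using f(2) ab unfolding internal_edge_def by auto
  then have "a \<in> {u,v}" "b \<in> {u,v}" using vertices_A[OF u nbu nbv] ab by auto
  then show ?thesis using ab by auto
qed

end


context five begin
lemma mix_exists:
  assumes g: "g > 0" and e: "\<forall>p. e p > 0" "e i > g" "e j > g"
  shows "\<exists>a b. (\<forall>p. a$p > 0) \<and> (\<forall>p. b$p > 0) \<and> tmix (smat a) (smat b) = tt e g {i,j}"
proof -
  define a where "a = (\<chi> p. if p = i then e i + g else if p = j then e j - g else e p)"
  define b where "b = (\<chi> p. if p = i then e i - g else if p = j then e j + g else e p)"
  have ep: "e k > 0" "e l > 0" "e m > 0" using e by auto
  have "CA False (a$i) (a$j) (a$k) (a$l) (a$m) (b$i) (b$j) (b$k) (b$l) (b$m) (e i) (e j) (e k) (e l) (e m) g"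
    unfolding a_def b_def CA_def using dist g ep e by (auto simp: min_def)
  from CA_ok[OF g e(2,3) ep this] show ?thesis
    using tmix_tt[of a b e g] unfolding POS_def all5 by blast
qed
end

context wpt begin

definition eA :: "'v \<Rightarrow> 'v \<Rightarrow> 5 \<Rightarrow> 5 \<Rightarrow> 5 \<Rightarrow> real" where
  "eA u v i j p = w {if p \<in> {i,j} then u else v, leaf p}"

definition dataA where
  "dataA u v i j k l m \<longleftrightarrow> u \<in> V \<and> u \<notin> range leaf \<and> v \<in> V \<and> v \<notin> range leaf \<and> {u,v} \<in> E \<and>
     nb u = {v, leaf i, leaf j} \<and> nb v = {u, leaf k, leaf l, leaf m} \<and> five i j k l m"

lemma dataA_edges:
  assumes d: "dataA u v i j k l m"
  shows "\<forall>p. {if p \<in> {i,j} then u else v, leaf p} \<in> E"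
proof -
  interpret five i j k l m using d unfolding dataA_def by blast
  have "{u, leaf i} \<in> E" "{u, leaf j} \<in> E" "{v, leaf k} \<in> E" "{v, leaf l} \<in> E" "{v, leaf m} \<in> E"
    using d unfolding dataA_def nb_def by (auto simp: set_eq_iff)
  then show ?thesis unfolding all5 using dist by auto
qed

lemma dataA_T:
  assumes r: "realizes E w leaf T" and d: "dataA u v i j k l m"
  shows "T = tt (eA u v i j) (w {u,v}) {i,j}"
proof -
  interpret five i j k l m using d unfolding dataA_def by blast
  define att where "att p = (if p \<in> {i,j} then u else v)" for p
  have ea: "{att p, leaf p} \<in> E" for p using dataA_edges[OF d] unfolding att_def by blast
  have uv: "u \<noteq> v" "u \<notin> range leaf" "v \<notin> range leaf" "{u,v} \<in> E" using d edge_ne unfolding dataA_def by auto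
  have an: "att p \<notin> range leaf" for p using uv unfolding att_def by auto
  show ?thesis
  proof (subst vec_eq_iff, intro allI, subst vec_eq_iff, intro allI)
    fix p q
    show "T$p$q = tt (eA u v i j) (w {u,v}) {i,j} $ p $ q"
    proof (cases "p = q")
      case True then show ?thesis using T_diag[OF r] by simp
    next
      case pq: False
      show ?thesis
      proof (cases "att p = att q")
        case True
        then have "T$p$q = w {att p, leaf p} + w {att q, leaf q}" using T_A[OF r ea[of p] _ pq] ea[of q] by simp
        moreover have ne: "(p \<in> {i,j}) = (q \<in> {i,j})" using True uv unfolding att_def by (auto split: if_splits)
        moreover have "tt (eA u v i j) (w {u,v}) {i,j} $ p $ q = eA u v i j p + eA u v i j q"
          using pq ne by (simp only: tt_nth if_False if_True; simp)
        moreover have "eA u v i j p = w {att p, leaf p}" "eA u v i j q = w {att q, leaf q}"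
          unfolding eA_def att_def by simp_all
        ultimately show ?thesis by linarith
      next
        case False
        have eaq: "{att p, att q} \<in> E" using False uv unfolding att_def by (auto simp: insert_commute)
        have "T$p$q = w {att p, leaf p} + w {att p, att q} + w {att q, leaf q}"
          using T_B[OF r ea[of p] eaq ea[of q] an an pq] .
        moreover have "w {att p, att q} = w {u,v}" using False unfolding att_def by (auto simp: insert_commute)
        moreover have ne: "(p \<in> {i,j}) \<noteq> (q \<in> {i,j})" using False uv unfolding att_def by auto
        moreover have "tt (eA u v i j) (w {u,v}) {i,j} $ p $ q = eA u v i j p + eA u v i j q + w {u,v}"
          using pq ne by (simp only: tt_nth if_False; simp)
        moreover have "eA u v i j p = w {att p, leaf p}" "eA u v i j q = w {att q, leaf q}"
          unfolding eA_def att_def by simp_all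
        ultimately show ?thesis by linarith
      qed
    qed
  qed
qed

lemma dataA_pos:
  assumes d: "dataA u v i j k l m"
  shows "w {u,v} > 0" "\<forall>p. eA u v i j p > 0"
  using d dataA_edges[OF d] wpos unfolding dataA_def eA_def by auto

lemma dataA_cond:
  assumes d: "dataA u v i j k l m" and gi: "eA u v i j i > w {u,v}" and gj: "eA u v i j j > w {u,v}"
  shows "one_internal_cherry_cond E w leaf"
proof -
  interpret five i j k l m using d unfolding dataA_def by blast
  have uv: "u \<in> V" "u \<notin> range leaf" "v \<notin> range leaf" "{u,v} \<in> E" using d unfolding dataA_def by auto
  have nbu: "nb u = {v, leaf i, leaf j}" and nbv: "nb v = {u, leaf k, leaf l, leaf m}" using d unfolding dataA_def by auto
  have int: "internal_edge leaf {u,v}" using uv unfolding internal_edge_def by auto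
  have only: "\<forall>f\<in>E. internal_edge leaf f \<longrightarrow> f = {u,v}" using only_internal_A[OF uv(1,2) nbu nbv] by blast
  have ei: "{u, leaf i} \<in> E" "{u, leaf j} \<in> E" using nbu unfolding nb_def by (auto simp: set_eq_iff)
  have ok: "\<forall>k'. {u, leaf k'} \<in> E \<longrightarrow> k' = i \<or> k' = j"
  proof (intro allI impI)
    fix k' assume "{u, leaf k'} \<in> E"
    then have "leaf k' \<in> nb u" unfolding nb_def by simp
    then have "leaf k' = leaf i \<or> leaf k' = leaf j" using nbu uv(3) by auto
    then show "k' = i \<or> k' = j" using injl by (auto simp: inj_eq)
  qed
  have "w {u, leaf i} > w {u,v}" "w {u, leaf j} > w {u,v}" using gi gj unfolding eA_def by auto
  then show ?thesis unfolding one_internal_cherry_cond_def using uv(4) int only dist(1) ei ok by blast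
qed


definition catdata where
  "catdata u v y i j k l m \<longleftrightarrow> u \<in> V \<and> u \<notin> range leaf \<and> v \<in> V \<and> v \<notin> range leaf \<and>
     y \<in> V \<and> y \<notin> range leaf \<and> {u,v} \<in> E \<and> y \<noteq> u \<and>
     nb u = {v, leaf i, leaf j} \<and> nb v = {u, leaf k, y} \<and> nb y = {v, leaf l, leaf m} \<and> five i j k l m"

lemma five_from_sides:
  assumes u: "u \<in> V" "u \<notin> range leaf" and e: "{u,v} \<in> E"
    and s1: "side v u = {i,j}" "i \<noteq> j" and s2: "side u v = {k,l,m}" "k \<noteq> l" "k \<noteq> m" "l \<noteq> m"
  shows "five i j k l m"
proof -
  have "side v u \<union> side u v = UNIV" "side v u \<inter> side u v = {}" using partition2[OF u e] by auto
  then show ?thesis unfolding five_def using s1 s2 by auto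
qed

lemma orient_case:
  assumes u: "u \<in> V" "u \<notin> range leaf" and v: "v \<in> V" "v \<notin> range leaf" and e: "{u,v} \<in> E"
    and c: "card (side v u) \<le> 2"
  shows "(\<exists>i j k l m. dataA u v i j k l m) \<or> (\<exists>y i j k l m. catdata u v y i j k l m)"
proof -
  have evu: "{v,u} \<in> E" using e by (simp add: insert_commute)
  obtain i j where ij: "i \<noteq> j" "nb u = {v, leaf i, leaf j}" "side v u = {i,j}" using twoleaf[OF u evu c] by blast
  have "card (side u v) = 3" using partition[OF u e] ij by simp
  from threeleaf[OF v e this] show ?thesis
  proof (elim disjE exE conjE)
    fix k l m assume h: "k \<noteq> l" "k \<noteq> m" "l \<noteq> m" "nb v = {u, leaf k, leaf l, leaf m}" "side u v = {k, l, m}"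
    have "five i j k l m" using five_from_sides[OF u e ij(3,1) h(5,1,2,3)] .
    then show ?thesis unfolding dataA_def using u v e ij h by blast
  next
    fix k y l m assume h: "y \<in> V" "y \<notin> range leaf" "y \<noteq> u" "nb v = {u, leaf k, y}" "nb y = {v, leaf l, leaf m}"
      "k \<noteq> l" "k \<noteq> m" "l \<noteq> m" "side u v = {k, l, m}"
    have "five i j k l m" using five_from_sides[OF u e ij(3,1) h(9,6,7,8)] .
    then show ?thesis unfolding catdata_def using u v e ij h by blast
  qed
qed

lemma nonstar_cases:
  assumes "\<exists>f\<in>E. internal_edge leaf f"
  shows "(\<exists>u v i j k l m. dataA u v i j k l m) \<or> (\<exists>u v y i j k l m. catdata u v y i j k l m)"
proof -
  obtain f where f: "f \<in> E" "internal_edge leaf f" using assms by blast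
  obtain a b where ab: "f = {a,b}" "a \<in> V" "b \<in> V" "a \<noteq> b" using f(1) Esub by blast
  have nl: "a \<notin> range leaf" "b \<notin> range leaf" using f(2) ab unfolding internal_edge_def by auto
  have e: "{a,b} \<in> E" "{b,a} \<in> E" using f ab by (auto simp: insert_commute)
  have "card (side b a) + card (side a b) = 5" using partition[OF ab(2) nl(1) e(1)] .
  then have "card (side b a) \<le> 2 \<or> card (side a b) \<le> 2" by linarith
  then show ?thesis
  proof
    assume "card (side b a) \<le> 2"
    from orient_case[OF ab(2) nl(1) ab(3) nl(2) e(1) this] show ?thesis by blast
  next
    assume "card (side a b) \<le> 2"
    from orient_case[OF ab(3) nl(2) ab(2) nl(1) e(2) this] show ?thesis by blast
  qed
qed

lemma cond_dataA:
  assumes "one_internal_cherry_cond E w leaf"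
  shows "\<exists>u v i j k l m. dataA u v i j k l m \<and> eA u v i j i > w {u,v} \<and> eA u v i j j > w {u,v}"
proof -
  obtain u v i j where c: "{u, v} \<in> E" "internal_edge leaf {u, v}"
        "\<forall>f\<in>E. internal_edge leaf f \<longrightarrow> f = {u, v}"
        "i \<noteq> j" "{u, leaf i} \<in> E" "{u, leaf j} \<in> E"
        "\<forall>k. {u, leaf k} \<in> E \<longrightarrow> k = i \<or> k = j"
        "w {u, leaf i} > w {u, v}" "w {u, leaf j} > w {u, v}"
    using assms unfolding one_internal_cherry_cond_def by blast
  have nl: "u \<notin> range leaf" "v \<notin> range leaf" using c(2) unfolding internal_edge_def by auto
  have V: "u \<in> V" "v \<in> V" "u \<noteq> v" using edge_ne[OF c(1)] by auto
  have nbu: "nb u = {v, leaf i, leaf j}"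
  proof
    show "nb u \<subseteq> {v, leaf i, leaf j}"
    proof
      fix y assume y: "y \<in> nb u"
      then have ey: "{u,y} \<in> E" by (rule nbE)
      show "y \<in> {v, leaf i, leaf j}"
      proof (cases "y \<in> range leaf")
        case True
        then obtain q where "y = leaf q" by blast
        then show ?thesis using c(7) ey by auto
      next
        case False
        then have "internal_edge leaf {u,y}" using nl unfolding internal_edge_def by auto
        then have "{u,y} = {u,v}" using c(3) ey by blast
        then show ?thesis by (metis doubleton_eq_iff insertI1)
      qed
    qed
    show "{v, leaf i, leaf j} \<subseteq> nb u" using c(1,5,6) unfolding nb_def by auto
  qed
  have evu: "{v,u} \<in> E" using c(1) by (simp add: insert_commute)
  have "nb u - {v} = {leaf i, leaf j}" using nbu nl by auto
  then have "side v u = side u (leaf i) \<union> side u (leaf j)" using side_step[OF evu nl(1)] by auto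
  then have svu: "side v u = {i,j}" using side_leaf c(5,6) by auto
  then have "card (side u v) = 3" using partition[OF V(1) nl(1) c(1)] c(4) by simp
  from threeleaf[OF V(2) nl(2) c(1) this] show ?thesis
  proof (elim disjE exE conjE)
    fix k l m assume h: "k \<noteq> l" "k \<noteq> m" "l \<noteq> m" "nb v = {u, leaf k, leaf l, leaf m}" "side u v = {k, l, m}"
    have "five i j k l m" using five_from_sides[OF V(1) nl(1) c(1) svu c(4) h(5,1,2,3)] .
    then have "dataA u v i j k l m" unfolding dataA_def using V nl c(1) nbu h by blast
    moreover have "eA u v i j i > w {u,v}" "eA u v i j j > w {u,v}" using c(8,9) unfolding eA_def by auto
    ultimately show ?thesis by blast
  next
    fix k y l m assume h: "y \<in> V" "y \<notin> range leaf" "y \<noteq> u" "nb v = {u, leaf k, y}"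
    have "{v,y} \<in> E" using h(4) unfolding nb_def by (auto simp: set_eq_iff)
    moreover have "internal_edge leaf {v,y}" using h(2) nl unfolding internal_edge_def by auto
    ultimately have "{v,y} = {u,v}" using c(3) by blast
    then have False using h(3) V(3) by (metis doubleton_eq_iff)
    then show ?thesis ..
  qed
qed

lemma cat_nomix:
  assumes r: "realizes E w leaf T" and d: "catdata u v y i j k l m"
  shows "\<not> (\<exists>D Db. star_metric D \<and> star_metric Db \<and> T = tmix D Db)"
proof
  assume "\<exists>D Db. star_metric D \<and> star_metric Db \<and> T = tmix D Db"
  then obtain a b where T: "T = tmix (smat a) (smat b)" unfolding star_metric_iff by blast
  interpret five i j k l m using d unfolding catdata_def by blast
  have nl: "u \<notin> range leaf" "v \<notin> range leaf" "y \<notin> range leaf" and uy: "u \<noteq> y"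
    using d unfolding catdata_def by auto
  have E: "{u, leaf i} \<in> E" "{u, leaf j} \<in> E" "{u,v} \<in> E" "{v, leaf k} \<in> E" "{v,y} \<in> E"
    "{y, leaf l} \<in> E" "{y, leaf m} \<in> E"
    using d unfolding catdata_def nb_def by (auto simp: set_eq_iff)
  have mx: "T$p$q = max (a$p + a$q) (b$p + b$q)" if "p \<noteq> q" for p q
    using that unfolding T tmix_def by simp
  have g: "w {u,v} > 0" "w {v,y} > 0" using E wpos by auto
  show False
    apply (rule cat[OF g, where ?a1.0="a$i" and ?a2.0="a$j" and ?a3.0="a$k" and ?a4.0="a$l" and ?a5.0="a$m"
       and ?b1.0="b$i" and ?b2.0="b$j" and ?b3.0="b$k" and ?b4.0="b$l" and ?b5.0="b$m"
       and ?e1.0="w {u, leaf i}" and ?e2.0="w {u, leaf j}" and ?e3.0="w {v, leaf k}" and ?e4.0="w {y, leaf l}"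
       and ?e5.0="w {y, leaf m}"])
    using dist
      mx[of i j] T_A[OF r E(1) E(2)]
      mx[of i k] T_B[OF r E(1) E(3) E(4) nl(1,2)]
      mx[of i l] T_C[OF r E(1) E(3) E(5) E(6) nl uy]
      mx[of i m] T_C[OF r E(1) E(3) E(5) E(7) nl uy]
      mx[of j k] T_B[OF r E(2) E(3) E(4) nl(1,2)]
      mx[of j l] T_C[OF r E(2) E(3) E(5) E(6) nl uy]
      mx[of j m] T_C[OF r E(2) E(3) E(5) E(7) nl uy]
      mx[of k l] T_B[OF r E(4) E(5) E(6) nl(2,3)]
      mx[of k m] T_B[OF r E(4) E(5) E(7) nl(2,3)]
      mx[of l m] T_A[OF r E(6) E(7)]
    by auto
qed

end
theorem lemma2p7:
  fixes V :: "'v set" and E :: "'v set set" and w :: "'v set \<Rightarrow> real"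
    and leaf :: "5 \<Rightarrow> 'v" and T :: "real^5^5"
  assumes tree: "weighted_phylo_tree V E w leaf"
    and real: "realizes E w leaf T"
    and nonstar: "\<exists>f\<in>E. internal_edge leaf f"
  shows "((\<exists>D Db. star_metric D \<and> star_metric Db \<and> T = tmix D Db)
           \<longleftrightarrow> one_internal_cherry_cond E w leaf) \<and>
         (one_internal_cherry_cond E w leaf \<longrightarrow>
         (\<exists>P :: nat \<Rightarrow> ((real^5^5) \<times> (real^5^5)) set.
            (\<forall>k<4. polygon2 (P k)) \<and>
            fiber T = (\<Union>k<4. P k \<union> prod.swap ` P k) \<and>
            (\<forall>k<4. \<forall>l<4. k \<noteq> l \<longrightarrow>
               (P k \<union> prod.swap ` P k) \<inter> (P l \<union> prod.swap ` P l) = {})))"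
proof -
  interpret wpt V E w leaf by (rule wpt.intro) (rule tree)
  have part1: "(\<exists>D Db. star_metric D \<and> star_metric Db \<and> T = tmix D Db) \<longleftrightarrow> one_internal_cherry_cond E w leaf"
  proof
    assume mix: "\<exists>D Db. star_metric D \<and> star_metric Db \<and> T = tmix D Db"
    from nonstar_cases[OF nonstar] show "one_internal_cherry_cond E w leaf"
    proof (elim disjE exE)
      fix u v i j k l m assume d: "dataA u v i j k l m"
      interpret f5: five i j k l m using d unfolding dataA_def by blast
      have Tt: "T = tt (eA u v i j) (w {u,v}) {i,j}" using dataA_T[OF real d] .
      obtain a b where ab: "\<forall>p. a$p > 0" "\<forall>p. b$p > 0" "T = tmix (smat a) (smat b)"
        using mix unfolding star_metric_iff by blast
      have mx: "MX (a$i) (a$j) (a$k) (a$l) (a$m) (b$i) (b$j) (b$k) (b$l) (b$m)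
         (eA u v i j i) (eA u v i j j) (eA u v i j k) (eA u v i j l) (eA u v i j m) (w {u,v})"
        using f5.tmix_tt[of a b "eA u v i j" "w {u,v}"] ab(3) Tt by simp
      have pos: "POS (a$i) (a$j) (a$k) (a$l) (a$m) (b$i) (b$j) (b$k) (b$l) (b$m)"
        using ab(1,2) unfolding POS_def by blast
      from one[OF dataA_pos(1)[OF d] pos mx] show ?thesis using dataA_cond[OF d] by blast
    next
      fix u v y i j k l m assume d: "catdata u v y i j k l m"
      then show ?thesis using cat_nomix[OF real d] mix by blast
    qed
  next
    assume c: "one_internal_cherry_cond E w leaf"
    obtain u v i j k l m where d: "dataA u v i j k l m" and gi: "eA u v i j i > w {u,v}" and gj: "eA u v i j j > w {u,v}"
      using cond_dataA[OF c] by blast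
    interpret f5: five i j k l m using d unfolding dataA_def by blast
    obtain a b where ab: "\<forall>p. a$p > 0" "\<forall>p. b$p > 0" "tmix (smat a) (smat b) = tt (eA u v i j) (w {u,v}) {i,j}"
      using f5.mix_exists[OF dataA_pos(1)[OF d] dataA_pos(2)[OF d] gi gj] by blast
    have "star_metric (smat a)" "star_metric (smat b)" using ab(1,2) unfolding star_metric_iff by blast+
    moreover have "T = tmix (smat a) (smat b)" using dataA_T[OF real d] ab(3) by simp
    ultimately show "\<exists>D Db. star_metric D \<and> star_metric Db \<and> T = tmix D Db" by blast
  qed
  have part2: "one_internal_cherry_cond E w leaf \<longrightarrow>
         (\<exists>P :: nat \<Rightarrow> ((real^5^5) \<times> (real^5^5)) set.
            (\<forall>k<4. polygon2 (P k)) \<and>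
            fiber T = (\<Union>k<4. P k \<union> prod.swap ` P k) \<and>
            (\<forall>k<4. \<forall>l<4. k \<noteq> l \<longrightarrow>
               (P k \<union> prod.swap ` P k) \<inter> (P l \<union> prod.swap ` P l) = {}))"
  proof
    assume c: "one_internal_cherry_cond E w leaf"
    obtain u v i j k l m where d: "dataA u v i j k l m" and gi: "eA u v i j i > w {u,v}" and gj: "eA u v i j j > w {u,v}"
      using cond_dataA[OF c] by blast
    interpret f5: five i j k l m using d unfolding dataA_def by blast
    have Tt: "T = tt (eA u v i j) (w {u,v}) {i,j}" using dataA_T[OF real d] .
    show "\<exists>P :: nat \<Rightarrow> ((real^5^5) \<times> (real^5^5)) set.
            (\<forall>k<4. polygon2 (P k)) \<and>
            fiber T = (\<Union>k<4. P k \<union> prod.swap ` P k) \<and>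
            (\<forall>k<4. \<forall>l<4. k \<noteq> l \<longrightarrow>
               (P k \<union> prod.swap ` P k) \<inter> (P l \<union> prod.swap ` P l) = {})"
      unfolding Tt by (rule f5.fiber_decomp[OF dataA_pos(1)[OF d] dataA_pos(2)[OF d] gi gj])
  qed
  show ?thesis using part1 part2 by blast
qed


end
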